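(* Let $1<p<\infty$ and $\alpha>0$. Then $$L^{p),\alpha}(\Omega)=\bigl(L^1(\Omega),L^p(\Omega)\bigr)_{1,\infty;-\frac{\alpha}{p}}$$ with equivalent norms, i.e. $\|f\|_{p),\alpha}\approx\sup_{0<t<1}t^{-1}(1-\log t)^{-\alpha/p}K(f,t;L^1,L^p)$ for all measurable $f$, with constants independent of $f$.
   Context: $\Omega\subset\mathbb R^n$ is a bounded open set with $|\Omega|=1$; $f_*$ is the decreasing rearrangement of $|f|$ on $(0,1)$; $\log$ is the natural logarithm. Grand Lebesgue space: $L^{p),\alpha}(\Omega)$ is the set of measurable $f$ with $\|f\|_{p),\alpha}=\sup_{0<t<1}(1-\log t)^{-\alpha/p}(\int_t^1 f_*^p)^{1/p}<\infty$. K-functional: $K(g,t;X_0,X_1)=\inf_{g=g_0+g_1}(\|g_0\|_{X_0}+t\|g_1\|_{X_1})$. For $\gamma\in\mathbb R$, $(X_0,X_1)_{1,\infty;\gamma}$ is the set of $g\in X_0+X_1$ with $\sup_{0<t<1}t^{-1}(1-\log t)^{\gamma}K(g,t;X_0,X_1)<\infty$, this supremum being the norm. *)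

theory Defs
  imports "HOL-Analysis.Analysis"
begin

definition enn_powr :: "ennreal \<Rightarrow> real \<Rightarrow> ennreal" where
  "enn_powr x q = (if x = \<infinity> then \<infinity> else ennreal (enn2real x powr q))"

definition distfun :: "'a::euclidean_space set \<Rightarrow> ('a \<Rightarrow> real) \<Rightarrow> real \<Rightarrow> ennreal" where
  "distfun \<Omega> f lam = emeasure lebesgue {x\<in>\<Omega>. \<bar>f x\<bar> > lam}"

definition decr_rearr :: "'a::euclidean_space set \<Rightarrow> ('a \<Rightarrow> real) \<Rightarrow> real \<Rightarrow> real" where
  "decr_rearr \<Omega> f s = Inf {lam::real. 0 \<le> lam \<and> distfun \<Omega> f lam \<le> ennreal s}"

definition grand_norm :: "'a::euclidean_space set \<Rightarrow> real \<Rightarrow> real \<Rightarrow> ('a \<Rightarrow> real) \<Rightarrow> ennreal" where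
  "grand_norm \<Omega> p \<alpha> f =
     (SUP t\<in>{0<..<1::real}. ennreal ((1 - ln t) powr (-\<alpha>/p)) *
        enn_powr (\<integral>\<^sup>+ s\<in>{t..1}. ennreal (decr_rearr \<Omega> f s powr p) \<partial>lborel) (1/p))"

definition Lq_norm :: "'a::euclidean_space set \<Rightarrow> real \<Rightarrow> ('a \<Rightarrow> real) \<Rightarrow> ennreal" where
  "Lq_norm \<Omega> q g = enn_powr (\<integral>\<^sup>+ x. ennreal (\<bar>g x\<bar> powr q) \<partial>(lebesgue_on \<Omega>)) (1/q)"

definition K_fun :: "'a::euclidean_space set \<Rightarrow> real \<Rightarrow> ('a \<Rightarrow> real) \<Rightarrow> real \<Rightarrow> ennreal" where
  "K_fun \<Omega> p g t =
     (INF (g0, g1)\<in>{(g0, g1). g0 \<in> borel_measurable (lebesgue_on \<Omega>) \<and>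
                              g1 \<in> borel_measurable (lebesgue_on \<Omega>) \<and>
                              (\<forall>x\<in>\<Omega>. g x = g0 x + g1 x)}.
        Lq_norm \<Omega> 1 g0 + ennreal t * Lq_norm \<Omega> p g1)"

definition interp_norm :: "'a::euclidean_space set \<Rightarrow> real \<Rightarrow> real \<Rightarrow> ('a \<Rightarrow> real) \<Rightarrow> ennreal" where
  "interp_norm \<Omega> p \<gamma> g =
     (SUP t\<in>{0<..<1::real}. ennreal (t powr (-1) * (1 - ln t) powr \<gamma>) * K_fun \<Omega> p g t)"

end

theory Submission
  imports Defs "HOL-Probability.Probability"
begin


context
  fixes \<Omega> :: "'a::euclidean_space set"
  assumes Om: "\<Omega> \<in> sets lebesgue" and Om1: "emeasure lebesgue \<Omega> = 1"
begin

lemma space_M: "space (lebesgue_on \<Omega>) = \<Omega>"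
  using Om by simp

lemma setM:
  fixes g :: "'a \<Rightarrow> real" and c :: real
  assumes g: "g \<in> borel_measurable (lebesgue_on \<Omega>)"
  shows "{x\<in>\<Omega>. c < \<bar>g x\<bar>} \<in> sets (lebesgue_on \<Omega>)"
proof -
  have "(\<lambda>x. \<bar>g x\<bar>) \<in> borel_measurable (lebesgue_on \<Omega>)" using g by (rule borel_measurable_abs)
  then have "{x\<in>space (lebesgue_on \<Omega>). c < \<bar>g x\<bar>} \<in> sets (lebesgue_on \<Omega>)" by measurable
  then show ?thesis using space_M by simp
qed

lemma setL:
  fixes g :: "'a \<Rightarrow> real" and c :: real
  assumes g: "g \<in> borel_measurable (lebesgue_on \<Omega>)"
  shows "{x\<in>\<Omega>. c < \<bar>g x\<bar>} \<in> sets lebesgue"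
  using setM[OF g, of c] Om by (simp add: sets_restrict_space_iff)

lemma distfun_M:
  fixes g :: "'a \<Rightarrow> real" and c :: real
  assumes g: "g \<in> borel_measurable (lebesgue_on \<Omega>)"
  shows "distfun \<Omega> g c = emeasure (lebesgue_on \<Omega>) {x\<in>\<Omega>. c < \<bar>g x\<bar>}"
  unfolding distfun_def using Om by (subst emeasure_restrict_space) auto

lemma distfun_le1:
  fixes g :: "'a \<Rightarrow> real"
  shows "distfun \<Omega> g c \<le> 1"
proof -
  have "distfun \<Omega> g c \<le> emeasure lebesgue \<Omega>"
    unfolding distfun_def by (rule emeasure_mono) (use Om in auto)
  then show ?thesis using Om1 by simp
qed

lemma distfun_mono:
  fixes g :: "'a \<Rightarrow> real" and c :: real
  assumes g: "g \<in> borel_measurable (lebesgue_on \<Omega>)" and "c \<le> d"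
  shows "distfun \<Omega> g d \<le> distfun \<Omega> g c"
  unfolding distfun_def
  by (rule emeasure_mono) (use assms setL[OF g] in auto)

lemma distfun_rcont:
  fixes g :: "'a \<Rightarrow> real" and c :: real
  assumes g: "g \<in> borel_measurable (lebesgue_on \<Omega>)"
  shows "(SUP n. distfun \<Omega> g (c + 1 / Suc n)) = distfun \<Omega> g c"
proof -
  define A where "A n = {x\<in>\<Omega>. c + 1 / Suc n < \<bar>g x\<bar>}" for n :: nat
  have "range A \<subseteq> sets lebesgue" unfolding A_def using setL[OF g] by auto
  moreover have "incseq A"
  proof (rule incseq_SucI)
    fix n
    have "1 / real (Suc (Suc n)) \<le> 1 / Suc n" by (simp add: frac_le)
    then show "A n \<subseteq> A (Suc n)" unfolding A_def by auto
  qed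
  ultimately have "(SUP n. emeasure lebesgue (A n)) = emeasure lebesgue (\<Union>i. A i)"
    by (rule SUP_emeasure_incseq)
  moreover have "(\<Union>i. A i) = {x\<in>\<Omega>. c < \<bar>g x\<bar>}"
  proof (safe)
    fix x i assume "x \<in> A i" then show "x \<in> \<Omega>" "c < \<bar>g x\<bar>" unfolding A_def
      by (auto intro: less_trans[rotated])
  next
    fix x assume x: "x \<in> \<Omega>" "c < \<bar>g x\<bar>"
    then obtain n where "1 / Suc n < \<bar>g x\<bar> - c"
      using reals_Archimedean[of "\<bar>g x\<bar> - c"] by (auto simp: inverse_eq_divide)
    then have "c + 1 / Suc n < \<bar>g x\<bar>" by simp
    then show "x \<in> (\<Union>i. A i)" unfolding A_def using x by blast
  qed
  ultimately show ?thesis unfolding distfun_def A_def by simp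
qed

lemma distfun_lim0:
  fixes g :: "'a \<Rightarrow> real"
  assumes g: "g \<in> borel_measurable (lebesgue_on \<Omega>)"
  shows "(INF n. distfun \<Omega> g (real n)) = 0"
proof -
  define A where "A n = {x\<in>\<Omega>. real n < \<bar>g x\<bar>}" for n :: nat
  have "range A \<subseteq> sets lebesgue" unfolding A_def using setL[OF g] by auto
  moreover have "decseq A"
    by (rule decseq_SucI) (auto simp: A_def)
  moreover have "emeasure lebesgue (A i) \<noteq> \<infinity>" for i
    using distfun_le1[of g "real i"] unfolding distfun_def A_def by (auto simp: top_unique)
  ultimately have "(INF n. emeasure lebesgue (A n)) = emeasure lebesgue (\<Inter>i. A i)"
    by (rule INF_emeasure_decseq)
  moreover have "(\<Inter>i. A i) = {}"
  proof (safe)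
    fix x assume "x \<in> (\<Inter>i. A i)"
    moreover obtain n where "\<bar>g x\<bar> < real n" using reals_Archimedean2 by blast
    ultimately show "x \<in> {}" unfolding A_def by (auto dest: spec[of _ n])
  qed
  ultimately show ?thesis unfolding distfun_def A_def by simp
qed

definition Sset :: "('a \<Rightarrow> real) \<Rightarrow> real \<Rightarrow> real set" where
  "Sset g s = {lam::real. 0 \<le> lam \<and> distfun \<Omega> g lam \<le> ennreal s}"

lemma dr_def: "decr_rearr \<Omega> g s = Inf (Sset g s)"
  unfolding decr_rearr_def Sset_def ..

lemma Sset_ne:
  fixes g :: "'a \<Rightarrow> real"
  assumes g: "g \<in> borel_measurable (lebesgue_on \<Omega>)" and s: "0 < s"
  shows "Sset g s \<noteq> {}"
proof -
  have "(INF n. distfun \<Omega> g (real n)) < ennreal s" using distfun_lim0[OF g] s by simp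
  then obtain n where "distfun \<Omega> g (real n) < ennreal s" by (auto simp: INF_less_iff)
  then have "real n \<in> Sset g s" unfolding Sset_def by auto
  then show ?thesis by auto
qed

lemma Sset_bdd: "bdd_below (Sset g s)"
  unfolding Sset_def by (rule bdd_belowI[of _ 0]) auto

lemma dr_nonneg:
  fixes g :: "'a \<Rightarrow> real"
  assumes g: "g \<in> borel_measurable (lebesgue_on \<Omega>)" and s: "0 < s"
  shows "0 \<le> decr_rearr \<Omega> g s"
  unfolding dr_def by (rule cInf_greatest[OF Sset_ne[OF g s]]) (auto simp: Sset_def)

lemma dr_le:
  fixes g :: "'a \<Rightarrow> real"
  assumes "0 \<le> lam" "distfun \<Omega> g lam \<le> ennreal s"
  shows "decr_rearr \<Omega> g s \<le> lam"
  unfolding dr_def by (rule cInf_lower[OF _ Sset_bdd]) (use assms in \<open>auto simp: Sset_def\<close>)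

lemma dr_attain:
  fixes g :: "'a \<Rightarrow> real"
  assumes g: "g \<in> borel_measurable (lebesgue_on \<Omega>)" and s: "0 < s"
  shows "distfun \<Omega> g (decr_rearr \<Omega> g s) \<le> ennreal s"
proof -
  let ?d = "decr_rearr \<Omega> g s"
  have "distfun \<Omega> g (?d + 1 / Suc n) \<le> ennreal s" for n
  proof -
    have "Inf (Sset g s) < ?d + 1 / Suc n" unfolding dr_def by simp
    then obtain lam where lam: "lam \<in> Sset g s" "lam < ?d + 1 / Suc n"
      using cInf_less_iff[OF Sset_ne[OF g s] Sset_bdd] by blast
    then have "distfun \<Omega> g (?d + 1 / Suc n) \<le> distfun \<Omega> g lam"
      by (intro distfun_mono[OF g]) simp
    also have "\<dots> \<le> ennreal s" using lam unfolding Sset_def by simp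
    finally show ?thesis .
  qed
  then have "(SUP n. distfun \<Omega> g (?d + 1 / Suc n)) \<le> ennreal s" by (rule SUP_least)
  then show ?thesis using distfun_rcont[OF g] by simp
qed

lemma dr_gt_iff:
  fixes g :: "'a \<Rightarrow> real"
  assumes g: "g \<in> borel_measurable (lebesgue_on \<Omega>)" and s: "0 < s" and c: "0 \<le> c"
  shows "c < decr_rearr \<Omega> g s \<longleftrightarrow> ennreal s < distfun \<Omega> g c"
proof
  assume "c < decr_rearr \<Omega> g s"
  then show "ennreal s < distfun \<Omega> g c"
    using dr_le[OF c, of g s] by (meson not_le)
next
  assume a: "ennreal s < distfun \<Omega> g c"
  show "c < decr_rearr \<Omega> g s"
  proof (rule ccontr)
    assume "\<not> c < decr_rearr \<Omega> g s"
    then have "distfun \<Omega> g c \<le> distfun \<Omega> g (decr_rearr \<Omega> g s)"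
      by (intro distfun_mono[OF g]) simp
    also have "\<dots> \<le> ennreal s" by (rule dr_attain[OF g s])
    finally show False using a by simp
  qed
qed

lemma dr_antimono:
  fixes g :: "'a \<Rightarrow> real"
  assumes g: "g \<in> borel_measurable (lebesgue_on \<Omega>)" and s: "0 < s" and st: "s \<le> t"
  shows "decr_rearr \<Omega> g t \<le> decr_rearr \<Omega> g s"
proof (rule dr_le)
  show "0 \<le> decr_rearr \<Omega> g s" by (rule dr_nonneg[OF g s])
  have "distfun \<Omega> g (decr_rearr \<Omega> g s) \<le> ennreal s" by (rule dr_attain[OF g s])
  also have "\<dots> \<le> ennreal t" using st by (rule ennreal_leI)
  finally show "distfun \<Omega> g (decr_rearr \<Omega> g s) \<le> ennreal t" .
qed

lemma dr_level_set:
  fixes g :: "'a \<Rightarrow> real" and c :: real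
  assumes g: "g \<in> borel_measurable (lebesgue_on \<Omega>)"
  shows "emeasure lborel {s\<in>{0<..<1}. c < decr_rearr \<Omega> g s} = distfun \<Omega> g c"
proof (cases "c < 0")
  case True
  have "{s\<in>{0<..<1}. c < decr_rearr \<Omega> g s} = {0<..<1}"
    using dr_nonneg[OF g] True by force
  moreover have "{x\<in>\<Omega>. c < \<bar>g x\<bar>} = \<Omega>" using True by force
  ultimately show ?thesis unfolding distfun_def using Om1 by simp
next
  case False
  define m where "m = enn2real (distfun \<Omega> g c)"
  have m: "distfun \<Omega> g c = ennreal m" "0 \<le> m" "m \<le> 1"
    using distfun_le1[of g c] unfolding m_def
    by (auto simp: ennreal_enn2real_if top_unique enn2real_leI)
  have "{s\<in>{0<..<1}. c < decr_rearr \<Omega> g s} = {0<..<m}"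
  proof (safe)
    fix s assume s: "s \<in> {0<..<1::real}" "c < decr_rearr \<Omega> g s"
    then have "ennreal s < ennreal m" using dr_gt_iff[OF g _ , of s c] False m by simp
    then show "s \<in> {0<..<m}" using s by (simp add: ennreal_less_iff)
  next
    fix s assume s: "s \<in> {0<..<m}"
    then show "s \<in> {0<..<1}" using m by auto
    have "ennreal s < ennreal m" using s by (simp add: ennreal_lessI)
    then show "c < decr_rearr \<Omega> g s" using dr_gt_iff[OF g _ , of s c] False m s by simp
  qed
  then show ?thesis using m by simp
qed


lemma dr_borel:
  fixes g :: "'a \<Rightarrow> real"
  assumes g: "g \<in> borel_measurable (lebesgue_on \<Omega>)"
  shows "decr_rearr \<Omega> g \<in> borel_measurable (restrict_space lborel {0<..<1})"
proof -
  have "mono_on {0<..<1} (\<lambda>s. - decr_rearr \<Omega> g s)"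
  proof (rule mono_onI)
    fix r t :: real assume "r \<in> {0<..<1}" "t \<in> {0<..<1}" "r \<le> t"
    then show "- decr_rearr \<Omega> g r \<le> - decr_rearr \<Omega> g t"
      using dr_antimono[OF g, of r t] by simp
  qed
  then have "(\<lambda>s. - decr_rearr \<Omega> g s) \<in> borel_measurable (restrict_space borel {0<..<1})"
    by (rule borel_measurable_mono_on_fnc)
  then have "(\<lambda>s. - (- decr_rearr \<Omega> g s)) \<in> borel_measurable (restrict_space borel {0<..<1})"
    by (rule borel_measurable_uminus)
  moreover have "measurable (restrict_space lborel {0<..<1::real}) (borel::real measure) =
      measurable (restrict_space borel {0<..<1}) borel"
    by (rule measurable_cong_sets) (simp_all add: sets_restrict_space)
  ultimately show ?thesis by simp
qed


end


context
  fixes \<Omega> :: "'a::euclidean_space set"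
  assumes Om: "\<Omega> \<in> sets lebesgue" and Om1: "emeasure lebesgue \<Omega> = 1"
begin

lemma equimeas:
  fixes g :: "'a \<Rightarrow> real" and \<phi> :: "real \<Rightarrow> ennreal"
  assumes g: "g \<in> borel_measurable (lebesgue_on \<Omega>)" and phi: "\<phi> \<in> borel_measurable borel"
  shows "(\<integral>\<^sup>+x. \<phi> \<bar>g x\<bar> \<partial>lebesgue_on \<Omega>) =
         (\<integral>\<^sup>+s. \<phi> (decr_rearr \<Omega> g s) * indicator {0<..<1} s \<partial>lborel)"
proof -
  define M where "M = lebesgue_on \<Omega>"
  define L where "L = restrict_space lborel {0<..<1::real}"
  have PM: "prob_space M" unfolding M_def
    by (rule prob_space_restrict_space) (use Om Om1 in auto)
  have PL: "prob_space L" unfolding L_def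
    by (rule prob_space_restrict_space) auto
  have spL: "space L = {0<..<1}" unfolding L_def by simp
  have spM: "space M = \<Omega>" unfolding M_def using Om by simp
  have hm: "(\<lambda>x. \<bar>g x\<bar>) \<in> borel_measurable M" unfolding M_def using g by (rule borel_measurable_abs)
  have gm: "decr_rearr \<Omega> g \<in> borel_measurable L" unfolding L_def by (rule dr_borel[OF Om Om1 g])
  define D1 where "D1 = distr M borel (\<lambda>x. \<bar>g x\<bar>)"
  define D2 where "D2 = distr L borel (decr_rearr \<Omega> g)"
  have R1: "real_distribution D1" unfolding D1_def
    using prob_space.real_distribution_distr[OF PM] hm by simp
  have R2: "real_distribution D2" unfolding D2_def
    using prob_space.real_distribution_distr[OF PL] gm by simp
  have "cdf D1 = cdf D2"
  proof
    fix x :: real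
    have A1: "{y\<in>\<Omega>. x < \<bar>g y\<bar>} \<in> sets M" unfolding M_def by (rule setM[OF Om Om1 g])
    have A2: "{s\<in>{0<..<1}. x < decr_rearr \<Omega> g s} \<in> sets L"
      using measurable_sets[OF gm, of "{x<..}"] spL by (simp add: Int_def conj_commute)
    have e1: "emeasure M {y\<in>\<Omega>. x < \<bar>g y\<bar>} = distfun \<Omega> g x"
      unfolding M_def by (rule distfun_M[OF Om Om1 g, symmetric])
    have e2: "emeasure L {s\<in>{0<..<1}. x < decr_rearr \<Omega> g s} = distfun \<Omega> g x"
      unfolding L_def
    proof (subst emeasure_restrict_space)
      show "{0<..<1::real} \<inter> space lborel \<in> sets lborel" by simp
      show "{s \<in> {0<..<1}. x < decr_rearr \<Omega> g s} \<subseteq> {0<..<1}" by auto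
      show "emeasure lborel {s \<in> {0<..<1}. x < decr_rearr \<Omega> g s} = distfun \<Omega> g x"
        by (rule dr_level_set[OF Om Om1 g])
    qed
    have "cdf D1 x = measure M ((\<lambda>x. \<bar>g x\<bar>) -` {..x} \<inter> space M)"
      unfolding cdf_def D1_def by (rule measure_distr[OF hm]) simp
    also have "(\<lambda>x. \<bar>g x\<bar>) -` {..x} \<inter> space M = space M - {y\<in>\<Omega>. x < \<bar>g y\<bar>}"
      using spM by auto
    also have "measure M \<dots> = 1 - measure M {y\<in>\<Omega>. x < \<bar>g y\<bar>}"
      by (rule prob_space.prob_compl[OF PM A1])
    also have "\<dots> = 1 - enn2real (distfun \<Omega> g x)" using e1 by (simp add: measure_def)
    finally have c1: "cdf D1 x = 1 - enn2real (distfun \<Omega> g x)" .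
    have "cdf D2 x = measure L (decr_rearr \<Omega> g -` {..x} \<inter> space L)"
      unfolding cdf_def D2_def by (rule measure_distr[OF gm]) simp
    also have "decr_rearr \<Omega> g -` {..x} \<inter> space L = space L - {s\<in>{0<..<1}. x < decr_rearr \<Omega> g s}"
      using spL by auto
    also have "measure L \<dots> = 1 - measure L {s\<in>{0<..<1}. x < decr_rearr \<Omega> g s}"
      by (rule prob_space.prob_compl[OF PL A2])
    also have "\<dots> = 1 - enn2real (distfun \<Omega> g x)" using e2 by (simp add: measure_def)
    finally show "cdf D1 x = cdf D2 x" using c1 by simp
  qed
  then have D: "D1 = D2" using cdf_unique[OF R1 R2] by simp
  have "(\<integral>\<^sup>+x. \<phi> \<bar>g x\<bar> \<partial>M) = (\<integral>\<^sup>+y. \<phi> y \<partial>D1)"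
    unfolding D1_def by (rule nn_integral_distr[symmetric]) (use hm phi in auto)
  also have "\<dots> = (\<integral>\<^sup>+y. \<phi> y \<partial>D2)" using D by simp
  also have "\<dots> = (\<integral>\<^sup>+s. \<phi> (decr_rearr \<Omega> g s) \<partial>L)"
    unfolding D2_def by (rule nn_integral_distr) (use gm phi in auto)
  also have "\<dots> = (\<integral>\<^sup>+s. \<phi> (decr_rearr \<Omega> g s) * indicator {0<..<1} s \<partial>lborel)"
    unfolding L_def by (rule nn_integral_restrict_space) simp
  finally show ?thesis unfolding M_def .
qed

end


lemma enn_powr_fin: "x \<noteq> \<infinity> \<Longrightarrow> enn_powr x q = ennreal (enn2real x powr q)"
  unfolding enn_powr_def by simp

lemma enn_powr_ennreal: "0 \<le> x \<Longrightarrow> enn_powr (ennreal x) q = ennreal (x powr q)"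
  unfolding enn_powr_def by simp

lemma enn_powr_top: "enn_powr \<infinity> q = \<infinity>"
  unfolding enn_powr_def by simp

lemma enn_powr_1: "enn_powr x 1 = x"
  unfolding enn_powr_def by (cases x) auto

lemma pow2_bound:
  fixes x y p :: real
  assumes "0 \<le> x" "0 \<le> y" "0 < p"
  shows "(x + y) powr p \<le> 2 powr p * (x powr p + y powr p)"
proof -
  have "(x + y) powr p \<le> (2 * max x y) powr p"
    by (rule powr_mono2) (use assms in auto)
  also have "\<dots> = 2 powr p * max x y powr p" by (rule powr_mult)
  also have "max x y powr p \<le> x powr p + y powr p"
    by (cases "x \<le> y") (auto simp: max_def)
  then have "2 powr p * max x y powr p \<le> 2 powr p * (x powr p + y powr p)"
    by (intro mult_left_mono) auto
  finally show ?thesis .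
qed

lemma trunc_bound:
  fixes x b p :: real
  assumes "0 \<le> x" "x \<le> b" "1 \<le> p"
  shows "x powr p \<le> b powr (p - 1) * x"
proof -
  have "x powr p = x powr (p - 1) * x powr 1" by (subst powr_add[symmetric]) simp
  also have "\<dots> = x powr (p - 1) * x" using assms by simp
  also have "\<dots> \<le> b powr (p - 1) * x"
    by (intro mult_right_mono powr_mono2) (use assms in auto)
  finally show ?thesis .
qed

lemma sum_pow_le:
  fixes x y p :: real
  assumes "0 \<le> x" "0 \<le> y" "0 < p"
  shows "x powr p + y powr p \<le> 2 * (x + y) powr p"
proof -
  have "x powr p \<le> (x + y) powr p" "y powr p \<le> (x + y) powr p"
    by (intro powr_mono2; use assms in auto)+
  then show ?thesis by simp
qed

abbreviation "Lm \<equiv> restrict_space lborel {0<..<1::real}"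

context
  fixes \<Omega> :: "'a::euclidean_space set"
  assumes Om: "\<Omega> \<in> sets lebesgue" and Om1: "emeasure lebesgue \<Omega> = 1"
begin

lemma dr_one:
  fixes g :: "'a \<Rightarrow> real"
  assumes g: "g \<in> borel_measurable (lebesgue_on \<Omega>)" and s: "1 \<le> s"
  shows "decr_rearr \<Omega> g s = 0"
proof -
  have "decr_rearr \<Omega> g s \<le> 0"
  proof (rule dr_le)
    have "distfun \<Omega> g 0 \<le> 1" by (rule distfun_le1[OF Om Om1])
    also have "\<dots> \<le> ennreal s" using s by simp
    finally show "distfun \<Omega> g 0 \<le> ennreal s" .
  qed (use Om Om1 in simp_all)
  moreover have "0 \<le> decr_rearr \<Omega> g s" using dr_nonneg[OF Om Om1 g, of s] s by simp
  ultimately show ?thesis by simp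
qed

lemma grand_integrand_L:
  fixes g :: "'a \<Rightarrow> real" and t p :: real
  assumes g: "g \<in> borel_measurable (lebesgue_on \<Omega>)" and t: "0 < t" and p: "0 < p"
  shows "(\<integral>\<^sup>+ s\<in>{t..1}. ennreal (decr_rearr \<Omega> g s powr p) \<partial>lborel) =
         (\<integral>\<^sup>+ s. ennreal (decr_rearr \<Omega> g s powr p) * indicator {t..<1} s \<partial>Lm)"
proof -
  have "(\<integral>\<^sup>+ s. ennreal (decr_rearr \<Omega> g s powr p) * indicator {t..<1} s \<partial>Lm) =
        (\<integral>\<^sup>+ s. ennreal (decr_rearr \<Omega> g s powr p) * indicator {t..<1} s * indicator {0<..<1} s \<partial>lborel)"
    by (rule nn_integral_restrict_space) simp
  also have "\<dots> = (\<integral>\<^sup>+ s\<in>{t..1}. ennreal (decr_rearr \<Omega> g s powr p) \<partial>lborel)"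
  proof (rule nn_integral_cong)
    fix s :: real
    show "ennreal (decr_rearr \<Omega> g s powr p) * indicator {t..<1} s * indicator {0<..<1} s =
          ennreal (decr_rearr \<Omega> g s powr p) * indicator {t..1} s"
    proof (cases "s = 1")
      case True then show ?thesis using dr_one[OF g, of 1] by simp
    next
      case False then show ?thesis using t by (auto simp: indicator_def)
    qed
  qed
  finally show ?thesis by simp
qed

lemma equimeasL:
  fixes g :: "'a \<Rightarrow> real" and \<phi> :: "real \<Rightarrow> ennreal"
  assumes g: "g \<in> borel_measurable (lebesgue_on \<Omega>)" and phi: "\<phi> \<in> borel_measurable borel"
  shows "(\<integral>\<^sup>+x. \<phi> \<bar>g x\<bar> \<partial>lebesgue_on \<Omega>) = (\<integral>\<^sup>+s. \<phi> (decr_rearr \<Omega> g s) \<partial>Lm)"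
  using equimeas[OF Om Om1 g phi] by (subst nn_integral_restrict_space) auto

lemma dr_borelL:
  fixes g :: "'a \<Rightarrow> real"
  assumes g: "g \<in> borel_measurable (lebesgue_on \<Omega>)"
  shows "decr_rearr \<Omega> g \<in> borel_measurable Lm"
  by (rule dr_borel[OF Om Om1 g])

end


lemma bterm:
  fixes A u p b X :: real
  assumes A: "0 \<le> A" and u: "0 < u" and p: "1 < p" and b: "b = (if A = 0 then 1 else A / u)"
    and X: "A \<le> X"
  shows "u powr (p - 1) * (b powr (p - 1) * A) \<le> X powr p"
proof (cases "A = 0")
  case True then show ?thesis by simp
next
  case False
  have e2: "u powr (p - 1) * (A / u) powr (p - 1) = A powr (p - 1)"
    using u by (simp add: powr_mult[symmetric])
  have "u powr (p - 1) * (b powr (p - 1) * A) = (u powr (p - 1) * (A / u) powr (p - 1)) * A"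
    using False b by simp
  also have "\<dots> = A powr (p - 1) * A powr 1" using e2 A by simp
  also have "\<dots> = A powr p" by (subst powr_add[symmetric]) simp
  also have "\<dots> \<le> X powr p" by (rule powr_mono2) (use A X p in auto)
  finally show ?thesis .
qed

lemma final_real:
  fixes \<tau> F X p :: real
  assumes \<tau>: "0 < \<tau>" and F: "0 \<le> F" and X: "0 \<le> X" and p: "1 < p"
    and H: "\<tau> powr p * F \<le> 2 powr (p + 1) * X powr p"
  shows "\<tau> * F powr (1/p) \<le> 4 * X"
proof -
  have "(\<tau> powr p * F) powr (1/p) \<le> (2 powr (p + 1) * X powr p) powr (1/p)"
    by (rule powr_mono2) (use H \<tau> F p in auto)
  moreover have "(\<tau> powr p * F) powr (1/p) = \<tau> * F powr (1/p)"
    using \<tau> p by (simp add: powr_mult powr_powr)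
  moreover have "(2 powr (p + 1) * X powr p) powr (1/p) = 2 powr ((p + 1) / p) * X"
    using X p by (simp add: powr_mult powr_powr)
  moreover have "2 powr ((p + 1) / p) \<le> 2 powr (2::real)"
    by (rule powr_mono) (use p in \<open>auto simp: field_simps\<close>)
  then have "2 powr ((p + 1) / p) * X \<le> 4 * X"
    using X by (intro mult_right_mono) auto
  ultimately show ?thesis by linarith
qed

context
  fixes \<Omega> :: "'a::euclidean_space set"
  assumes Om: "\<Omega> \<in> sets lebesgue" and Om1: "emeasure lebesgue \<Omega> = 1"
begin

lemma PM: "prob_space (lebesgue_on \<Omega>)"
  by (rule prob_space_restrict_space) (use Om Om1 in auto)

lemma ind_Lm [measurable]: "(A::real set) \<in> sets borel \<Longrightarrow> indicator A \<in> borel_measurable Lm"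
  by (rule measurable_restrict_space1) simp

lemma emeasure_Lm: "0 \<le> a \<Longrightarrow> a \<le> b \<Longrightarrow> b \<le> 1 \<Longrightarrow> emeasure Lm {a<..<b} = ennreal (b - a)"
  by (subst emeasure_restrict_space) auto

lemma lower_core:
  fixes f g0 g1 :: "'a \<Rightarrow> real" and u p :: real
  assumes f: "f \<in> borel_measurable (lebesgue_on \<Omega>)"
    and g0: "g0 \<in> borel_measurable (lebesgue_on \<Omega>)"
    and g1: "g1 \<in> borel_measurable (lebesgue_on \<Omega>)"
    and sum: "\<forall>x\<in>\<Omega>. f x = g0 x + g1 x"
    and u: "0 < u" "u < 1" and p: "1 < p"
  shows "ennreal (u powr ((p-1)/p)) * enn_powr (\<integral>\<^sup>+ s\<in>{u..1}. ennreal (decr_rearr \<Omega> f s powr p) \<partial>lborel) (1/p)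
         \<le> 4 * (Lq_norm \<Omega> 1 g0 + ennreal (u powr ((p-1)/p)) * Lq_norm \<Omega> p g1)"
proof -
  define \<tau> where "\<tau> = u powr ((p-1)/p)"
  have \<tau>: "0 < \<tau>" unfolding \<tau>_def using u by simp
  define I0 where "I0 = (\<integral>\<^sup>+x. ennreal (\<bar>g0 x\<bar> powr 1) \<partial>lebesgue_on \<Omega>)"
  define I1 where "I1 = (\<integral>\<^sup>+x. ennreal (\<bar>g1 x\<bar> powr p) \<partial>lebesgue_on \<Omega>)"
  have L0: "Lq_norm \<Omega> 1 g0 = I0" unfolding Lq_norm_def I0_def by (simp add: enn_powr_1)
  have L1: "Lq_norm \<Omega> p g1 = enn_powr I1 (1/p)" unfolding Lq_norm_def I1_def ..
  show ?thesis
  proof (cases "I0 = \<infinity> \<or> I1 = \<infinity>")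
    case True
    then have "Lq_norm \<Omega> 1 g0 + ennreal \<tau> * Lq_norm \<Omega> p g1 = \<infinity>"
      using L0 L1 \<tau> by (auto simp: enn_powr_def ennreal_mult_eq_top_iff)
    then have "4 * (Lq_norm \<Omega> 1 g0 + ennreal \<tau> * Lq_norm \<Omega> p g1) = \<infinity>"
      by (simp add: ennreal_mult_eq_top_iff)
    then show ?thesis unfolding \<tau>_def[symmetric] by (simp del: distrib_left_numeral)
  next
    case False
    define A where "A = enn2real I0"
    define Bp where "Bp = enn2real I1"
    have A: "I0 = ennreal A" "0 \<le> A" using False unfolding A_def by (auto simp: less_top)
    have B: "I1 = ennreal Bp" "0 \<le> Bp" using False unfolding Bp_def by (auto simp: less_top)
    define b where "b = (if A = 0 then 1 else A / u)"
    have b: "0 < b" using A u unfolding b_def by auto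
    define E where "E = {x\<in>\<Omega>. b < \<bar>g0 x\<bar>}"
    have E: "E \<in> sets (lebesgue_on \<Omega>)" unfolding E_def by (rule setM[OF Om Om1 g0])
    interpret PMi: prob_space "lebesgue_on \<Omega>" by (rule PM)
    have "ennreal b * emeasure (lebesgue_on \<Omega>) E = (\<integral>\<^sup>+x. ennreal b * indicator E x \<partial>lebesgue_on \<Omega>)"
      by (rule nn_integral_cmult_indicator[OF E, symmetric])
    also have "\<dots> \<le> I0" unfolding I0_def
      by (rule nn_integral_mono) (auto simp: indicator_def E_def less_imp_le)
    finally have bE: "ennreal b * emeasure (lebesgue_on \<Omega>) E \<le> ennreal A" using A by simp
    define e where "e = measure (lebesgue_on \<Omega>) E"
    have e: "emeasure (lebesgue_on \<Omega>) E = ennreal e" "0 \<le> e"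
      unfolding e_def by (simp_all add: PMi.emeasure_eq_measure)
    have "b * e \<le> A" using bE e b A by (simp add: ennreal_mult[symmetric])
    have eu: "e \<le> u"
    proof (cases "A = 0")
      case True
      then show ?thesis using \<open>b * e \<le> A\<close> b e u by (simp add: mult_le_0_iff)
    next
      case False
      then have "A / u * e \<le> A" using \<open>b * e \<le> A\<close> b_def by simp
      then have "A * e \<le> A * u" using u by (simp add: field_simps)
      then show ?thesis using False A by (simp add: mult_le_cancel_left)
    qed
    define a where "a = decr_rearr \<Omega> f u"
    have a: "0 \<le> a" unfolding a_def by (rule dr_nonneg[OF Om Om1 f u(1)])
    have fsm [measurable]: "decr_rearr \<Omega> f \<in> borel_measurable Lm" by (rule dr_borelL[OF Om Om1 f])
    have fm [measurable]: "f \<in> borel_measurable (lebesgue_on \<Omega>)" by (rule f)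
    have g0m [measurable]: "g0 \<in> borel_measurable (lebesgue_on \<Omega>)" by (rule g0)
    have g1m [measurable]: "g1 \<in> borel_measurable (lebesgue_on \<Omega>)" by (rule g1)
    have Em [measurable]: "E \<in> sets (lebesgue_on \<Omega>)" by (rule E)
    define Fu where "Fu = (\<integral>\<^sup>+ s\<in>{u..1}. ennreal (decr_rearr \<Omega> f s powr p) \<partial>lborel)"
    have Fu_L: "Fu = (\<integral>\<^sup>+ s. ennreal (decr_rearr \<Omega> f s powr p) * indicator {u..<1} s \<partial>Lm)"
      unfolding Fu_def by (rule grand_integrand_L[OF Om Om1 f u(1)]) (use p in simp)
    have uL: "{0<..<u} \<in> sets Lm" by (subst sets_restrict_space_iff) (use u in auto)
    have H2: "(\<integral>\<^sup>+ s. ennreal (a powr p) * indicator {0<..<u} s \<partial>Lm) = ennreal (a powr p) * ennreal u"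
      using u by (simp add: nn_integral_cmult_indicator[OF uL] emeasure_Lm)
    have S: "Fu + ennreal (a powr p) * ennreal u \<le> (\<integral>\<^sup>+ s. ennreal (min (decr_rearr \<Omega> f s) a powr p) \<partial>Lm)"
    proof -
      have "Fu + ennreal (a powr p) * ennreal u = (\<integral>\<^sup>+ s. ennreal (decr_rearr \<Omega> f s powr p) * indicator {u..<1} s
              + ennreal (a powr p) * indicator {0<..<u} s \<partial>Lm)"
        unfolding Fu_L H2[symmetric] by (rule nn_integral_add[symmetric]) measurable
      also have "\<dots> \<le> (\<integral>\<^sup>+ s. ennreal (min (decr_rearr \<Omega> f s) a powr p) \<partial>Lm)"
      proof (rule nn_integral_mono)
        fix s assume "s \<in> space Lm"
        then have s: "0 < s" "s < 1" by auto
        show "ennreal (decr_rearr \<Omega> f s powr p) * indicator {u..<1} s + ennreal (a powr p) * indicator {0<..<u} s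
              \<le> ennreal (min (decr_rearr \<Omega> f s) a powr p)"
        proof (cases "s < u")
          case True
          have "a \<le> decr_rearr \<Omega> f s" unfolding a_def
            by (rule dr_antimono[OF Om Om1 f s(1)]) (use True in simp)
          then have "min (decr_rearr \<Omega> f s) a = a" by simp
          then show ?thesis using True s by (simp add: indicator_def)
        next
          case False
          have "decr_rearr \<Omega> f s \<le> a" unfolding a_def
            by (rule dr_antimono[OF Om Om1 f u(1)]) (use False in simp)
          then have "min (decr_rearr \<Omega> f s) a = decr_rearr \<Omega> f s" by simp
          then show ?thesis using False s by (simp add: indicator_def)
        qed
      qed
      finally show ?thesis .
    qed
    have phim: "(\<lambda>y. ennreal (min y a powr p)) \<in> borel_measurable borel" by measurable
    have EQ: "(\<integral>\<^sup>+ s. ennreal (min (decr_rearr \<Omega> f s) a powr p) \<partial>Lm) =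
              (\<integral>\<^sup>+x. ennreal (min \<bar>f x\<bar> a powr p) \<partial>lebesgue_on \<Omega>)"
      using equimeasL[OF Om Om1 f phim] by simp
    define R where "R x = a powr p * indicator E x + 2 powr p * (b powr (p-1) * \<bar>g0 x\<bar> + \<bar>g1 x\<bar> powr p)" for x
    have X: "(\<integral>\<^sup>+x. ennreal (min \<bar>f x\<bar> a powr p) \<partial>lebesgue_on \<Omega>) \<le> (\<integral>\<^sup>+x. ennreal (R x) \<partial>lebesgue_on \<Omega>)"
    proof (rule nn_integral_mono)
      fix x assume "x \<in> space (lebesgue_on \<Omega>)"
      then have x: "x \<in> \<Omega>" using Om by simp
      have nn: "0 \<le> 2 powr p * (b powr (p-1) * \<bar>g0 x\<bar> + \<bar>g1 x\<bar> powr p)" using b by simp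
      have "min \<bar>f x\<bar> a powr p \<le> R x"
      proof (cases "x \<in> E")
        case True
        have "min \<bar>f x\<bar> a powr p \<le> a powr p" by (rule powr_mono2) (use p a in auto)
        moreover have "R x = a powr p + 2 powr p * (b powr (p-1) * \<bar>g0 x\<bar> + \<bar>g1 x\<bar> powr p)"
          using True unfolding R_def by simp
        ultimately show ?thesis using nn by linarith
      next
        case False
        then have g0b: "\<bar>g0 x\<bar> \<le> b" using x unfolding E_def by auto
        have "min \<bar>f x\<bar> a powr p \<le> (\<bar>g0 x\<bar> + \<bar>g1 x\<bar>) powr p"
          by (rule powr_mono2) (use p a sum x in auto)
        also have "\<dots> \<le> 2 powr p * (\<bar>g0 x\<bar> powr p + \<bar>g1 x\<bar> powr p)"
          by (rule pow2_bound) (use p in auto)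
        also have "\<bar>g0 x\<bar> powr p \<le> b powr (p-1) * \<bar>g0 x\<bar>"
          by (rule trunc_bound) (use g0b p in auto)
        then have "2 powr p * (\<bar>g0 x\<bar> powr p + \<bar>g1 x\<bar> powr p) \<le> 2 powr p * (b powr (p-1) * \<bar>g0 x\<bar> + \<bar>g1 x\<bar> powr p)"
          by (intro mult_left_mono) auto
        finally show ?thesis using False unfolding R_def by simp
      qed
      then show "ennreal (min \<bar>f x\<bar> a powr p) \<le> ennreal (R x)" by (rule ennreal_leI)
    qed
    have RI: "(\<integral>\<^sup>+x. ennreal (R x) \<partial>lebesgue_on \<Omega>) =
       ennreal (a powr p) * emeasure (lebesgue_on \<Omega>) E + ennreal (2 powr p) * (ennreal (b powr (p-1)) * I0 + I1)"
    proof -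
      have "(\<integral>\<^sup>+x. ennreal (R x) \<partial>lebesgue_on \<Omega>) = (\<integral>\<^sup>+x. ennreal (a powr p) * indicator E x +
          ennreal (2 powr p) * (ennreal (b powr (p-1)) * ennreal (\<bar>g0 x\<bar> powr 1) + ennreal (\<bar>g1 x\<bar> powr p)) \<partial>lebesgue_on \<Omega>)"
        by (rule nn_integral_cong) (auto simp: R_def indicator_def ennreal_mult ennreal_plus)
      also have "\<dots> = (\<integral>\<^sup>+x. ennreal (a powr p) * indicator E x \<partial>lebesgue_on \<Omega>) +
          (\<integral>\<^sup>+x. ennreal (2 powr p) * (ennreal (b powr (p-1)) * ennreal (\<bar>g0 x\<bar> powr 1) + ennreal (\<bar>g1 x\<bar> powr p)) \<partial>lebesgue_on \<Omega>)"
        by (rule nn_integral_add) measurable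
      also have "(\<integral>\<^sup>+x. ennreal (a powr p) * indicator E x \<partial>lebesgue_on \<Omega>) = ennreal (a powr p) * emeasure (lebesgue_on \<Omega>) E"
        by (rule nn_integral_cmult_indicator[OF E])
      also have "(\<integral>\<^sup>+x. ennreal (2 powr p) * (ennreal (b powr (p-1)) * ennreal (\<bar>g0 x\<bar> powr 1) + ennreal (\<bar>g1 x\<bar> powr p)) \<partial>lebesgue_on \<Omega>)
          = ennreal (2 powr p) * (\<integral>\<^sup>+x. ennreal (b powr (p-1)) * ennreal (\<bar>g0 x\<bar> powr 1) + ennreal (\<bar>g1 x\<bar> powr p) \<partial>lebesgue_on \<Omega>)"
        by (rule nn_integral_cmult) measurable
      also have "(\<integral>\<^sup>+x. ennreal (b powr (p-1)) * ennreal (\<bar>g0 x\<bar> powr 1) + ennreal (\<bar>g1 x\<bar> powr p) \<partial>lebesgue_on \<Omega>)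
          = (\<integral>\<^sup>+x. ennreal (b powr (p-1)) * ennreal (\<bar>g0 x\<bar> powr 1) \<partial>lebesgue_on \<Omega>) + I1"
        unfolding I1_def by (rule nn_integral_add) measurable
      also have "(\<integral>\<^sup>+x. ennreal (b powr (p-1)) * ennreal (\<bar>g0 x\<bar> powr 1) \<partial>lebesgue_on \<Omega>) = ennreal (b powr (p-1)) * I0"
        unfolding I0_def by (rule nn_integral_cmult) measurable
      finally show ?thesis .
    qed
    define Y where "Y = 2 powr p * (b powr (p-1) * A + Bp)"
    have Y: "0 \<le> Y" unfolding Y_def using A B b by simp
    have "Fu + ennreal (a powr p) * ennreal u \<le> ennreal (a powr p) * ennreal u + ennreal Y"
    proof -
      have "Fu + ennreal (a powr p) * ennreal u \<le>
         ennreal (a powr p) * emeasure (lebesgue_on \<Omega>) E + ennreal (2 powr p) * (ennreal (b powr (p-1)) * I0 + I1)"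
        using S EQ X RI by simp
      also have "\<dots> \<le> ennreal (a powr p) * ennreal u + ennreal Y"
      proof (rule add_mono)
        show "ennreal (a powr p) * emeasure (lebesgue_on \<Omega>) E \<le> ennreal (a powr p) * ennreal u"
          using e eu by (intro mult_left_mono) auto
        show "ennreal (2 powr p) * (ennreal (b powr (p-1)) * I0 + I1) \<le> ennreal Y"
          unfolding Y_def using A B b by (simp add: ennreal_mult ennreal_plus)
      qed
      finally show ?thesis .
    qed
    then have FuY: "Fu \<le> ennreal Y"
      by (auto simp: add.commute[of Fu] ennreal_add_left_cancel_le ennreal_mult_eq_top_iff)
    have Fufin: "Fu \<noteq> \<infinity>" using FuY by (auto simp: top_unique)
    define F where "F = enn2real Fu"
    have F: "Fu = ennreal F" "0 \<le> F" unfolding F_def using Fufin by (auto simp: less_top)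
    have FY: "F \<le> Y" using FuY F Y by simp
    define B where "B = Bp powr (1/p)"
    have B0: "0 \<le> B" unfolding B_def by simp
    have BpB: "Bp = B powr p" unfolding B_def using B p by (simp add: powr_powr)
    define X where "X = A + \<tau> * B"
    have X0: "0 \<le> X" unfolding X_def using A B0 \<tau> by simp
    have tp: "\<tau> powr p = u powr (p - 1)" unfolding \<tau>_def using p by (simp add: powr_powr)
    have key: "\<tau> powr p * F \<le> 2 powr (p + 1) * X powr p"
    proof -
      have "\<tau> powr p * F \<le> \<tau> powr p * Y" using FY by (intro mult_left_mono) auto
      also have "\<dots> = 2 powr p * (u powr (p - 1) * (b powr (p-1) * A) + (\<tau> * B) powr p)"
        unfolding Y_def tp[symmetric] BpB using \<tau> B0 by (simp add: powr_mult algebra_simps)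
      also have "\<dots> \<le> 2 powr p * (X powr p + X powr p)"
      proof (intro mult_left_mono add_mono)
        show "u powr (p - 1) * (b powr (p-1) * A) \<le> X powr p"
          by (rule bterm[OF A(2) u(1) p b_def]) (use \<tau> B0 in \<open>simp add: X_def\<close>)
        show "(\<tau> * B) powr p \<le> X powr p"
          by (rule powr_mono2) (use p A \<tau> B0 in \<open>auto simp: X_def\<close>)
      qed simp
      also have "\<dots> = 2 powr (p + 1) * X powr p" by (simp add: powr_add)
      finally show ?thesis .
    qed
    have fin: "\<tau> * F powr (1/p) \<le> 4 * X" by (rule final_real[OF \<tau> F(2) X0 p key])
    have LHS: "ennreal \<tau> * enn_powr Fu (1/p) = ennreal (\<tau> * F powr (1/p))"
      using F \<tau> by (simp add: enn_powr_ennreal ennreal_mult)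
    have RHS: "4 * (Lq_norm \<Omega> 1 g0 + ennreal \<tau> * Lq_norm \<Omega> p g1) = ennreal (4 * X)"
      unfolding L0 L1 X_def B_def using A B \<tau> by (simp add: enn_powr_ennreal ennreal_mult ennreal_plus)
    show ?thesis
      unfolding \<tau>_def[symmetric] Fu_def[symmetric] LHS RHS using fin by (rule ennreal_leI)
  qed
qed

end


lemma poly_geo:
  fixes \<theta> \<beta> :: real and k :: nat
  assumes th: "0 < \<theta>" and be: "0 < \<beta>"
  shows "(real k + 3) powr \<beta> \<le> exp (3*\<theta>/2 - \<beta> - \<beta> * ln (\<theta>/(2*\<beta>))) * exp (\<theta>/2) ^ k"
proof -
  define \<delta> where "\<delta> = \<theta>/(2*\<beta>)"
  have d: "0 < \<delta>" unfolding \<delta>_def using th be by simp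
  have "ln (\<delta> * (real k + 3)) \<le> \<delta> * (real k + 3) - 1" by (rule ln_le_minus_one) (use d in simp)
  moreover have "ln (\<delta> * (real k + 3)) = ln \<delta> + ln (real k + 3)" using d by (simp add: ln_mult)
  ultimately have "ln (real k + 3) \<le> \<delta> * (real k + 3) - 1 - ln \<delta>" by simp
  then have "\<beta> * ln (real k + 3) \<le> \<beta> * (\<delta> * (real k + 3) - 1 - ln \<delta>)"
    using be by (intro mult_left_mono) auto
  also have "\<dots> = (3*\<theta>/2 - \<beta> - \<beta> * ln \<delta>) + real k * (\<theta>/2)"
    unfolding \<delta>_def using be by (simp add: field_simps)
  finally have L: "\<beta> * ln (real k + 3) \<le> (3*\<theta>/2 - \<beta> - \<beta> * ln \<delta>) + real k * (\<theta>/2)" .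
  have "(real k + 3) powr \<beta> = exp (\<beta> * ln (real k + 3))" by (simp add: powr_def)
  also have "\<dots> \<le> exp ((3*\<theta>/2 - \<beta> - \<beta> * ln \<delta>) + real k * (\<theta>/2))" using L by simp
  also have "\<dots> = exp (3*\<theta>/2 - \<beta> - \<beta> * ln \<delta>) * exp (real k * (\<theta>/2))"
    by (rule exp_add)
  also have "exp (real k * (\<theta>/2)) = exp (\<theta>/2) ^ k" by (rule exp_of_nat_mult)
  finally show ?thesis unfolding \<delta>_def .
qed

lemma log_bound:
  fixes u :: real and k :: nat
  assumes u: "0 < u" "u < 1"
  shows "1 - ln (u / 2 ^ Suc k / 2) \<le> (1 - ln u) * (real k + 3)"
proof -
  have e1: "u / 2 ^ Suc k / 2 = u / 2 ^ (Suc (Suc k))" by simp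
  have gen: "\<And>y::real. 0 < y \<Longrightarrow> ln (u / y) = ln u - ln y" using u by (simp add: ln_div)
  have e2: "ln (u / 2 ^ (Suc (Suc k))) = ln u - ln (2 ^ (Suc (Suc k)))"
    by (rule gen) simp
  have e3: "ln ((2::real) ^ (Suc (Suc k))) = real (Suc (Suc k)) * ln 2" by (rule ln_realpow)
  have "ln (u / 2 ^ Suc k / 2) = ln u - real (Suc k) * ln 2 - ln 2"
    unfolding e1 e2 e3 by (simp add: algebra_simps)
  moreover have "ln 2 < (1::real)" by (rule ln_2_less_1)
  moreover have "ln u < 0" using u by simp
  moreover have "0 < ln (2::real)" by simp
  moreover have "real (Suc k) * ln 2 \<le> real (Suc k) * 1"
    by (intro mult_left_mono) (use ln_2_less_1 in auto)
  moreover have "real (Suc k) = real k + 1" by simp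
  ultimately have "1 - ln (u / 2 ^ Suc k / 2) \<le> (1 - ln u) + (real k + 2)" by (smt (verit))
  also have "\<dots> \<le> (1 - ln u) + (1 - ln u) * (real k + 2)"
    using \<open>ln u < 0\<close> mult_nonneg_nonneg[of "real k + 2" "- ln u"]
    by (intro add_left_mono) (simp add: algebra_simps)
  also have "\<dots> = (1 - ln u) * (real k + 3)" by (simp add: algebra_simps)
  finally show ?thesis .
qed

lemma tk_pow:
  fixes u a :: real and k :: nat
  assumes u: "0 < u"
  shows "(u / 2 ^ Suc k) powr a = u powr a * exp (- (a * ln 2)) ^ Suc k"
proof -
  have e0: "(u / 2 ^ Suc k) powr a = u powr a / (2 ^ Suc k) powr a" using u by (simp add: powr_divide)
  have p2: "(2::real) ^ Suc k = 2 powr (real (Suc k))" by (rule powr_realpow[symmetric]) simp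
  have "((2::real) ^ Suc k) powr a = exp (real (Suc k) * (a * ln 2))"
    unfolding p2 by (simp add: powr_powr powr_def algebra_simps)
  also have "\<dots> = exp (a * ln 2) ^ Suc k" by (rule exp_of_nat_mult)
  finally have e1: "((2::real) ^ Suc k) powr a = exp (a * ln 2) ^ Suc k" .
  have e2: "exp (- (a * ln 2)) ^ Suc k = inverse (exp (a * ln 2) ^ Suc k)"
    by (simp only: exp_minus power_inverse)
  show ?thesis unfolding e0 e1 e2 by (simp only: divide_inverse)
qed

lemma dyadic_cover:
  fixes u s :: real
  assumes "0 < s" "s < u"
  shows "\<exists>k. u / 2 ^ Suc k < s \<and> s \<le> u / 2 ^ k"
proof -
  define x where "x = u / s"
  have x: "1 < x" unfolding x_def using assms by simp
  define k where "k = nat \<lfloor>log 2 x\<rfloor>"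
  have lg: "0 < log 2 x" using x by simp
  have k1: "real k \<le> log 2 x" unfolding k_def using lg by linarith
  have k2: "log 2 x < real k + 1" unfolding k_def using lg by linarith
  have "2 powr (real k) \<le> 2 powr (log 2 x)" using k1 by simp
  then have a: "2 ^ k \<le> x" using x by (simp add: powr_realpow)
  have "2 powr (log 2 x) < 2 powr (real k + 1)" using k2 by simp
  moreover have "2 powr (real k + 1) = (2::real) ^ Suc k" using powr_realpow[of 2 "Suc k"] by (simp add: add.commute)
  ultimately have b: "x < 2 ^ Suc k" using x by simp
  have "u / 2 ^ Suc k < s" using b assms unfolding x_def by (simp add: field_simps)
  moreover have "s \<le> u / 2 ^ k" using a assms unfolding x_def by (simp add: field_simps)
  ultimately show ?thesis by blast
qed

definition hardyK :: "real \<Rightarrow> real \<Rightarrow> real" where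
  "hardyK p \<beta> = (let \<theta> = (1 - 1/p) * ln 2 in
     exp (3*\<theta>/2 - \<beta> - \<beta> * ln (\<theta>/(2*\<beta>))) * exp (-\<theta>) / (1 - exp (-\<theta>/2)))"

lemma hardyK_pos: "1 < p \<Longrightarrow> 0 < hardyK p \<beta>"
  unfolding hardyK_def Let_def by (simp add: field_simps)

lemma hardy:
  fixes \<phi> :: "real \<Rightarrow> real" and c p \<beta> u :: real
  assumes anti: "\<And>s t. 0 < s \<Longrightarrow> s \<le> t \<Longrightarrow> t < 1 \<Longrightarrow> \<phi> t \<le> \<phi> s"
    and nn: "\<And>t. 0 < t \<Longrightarrow> t < 1 \<Longrightarrow> 0 \<le> \<phi> t"
    and bd: "\<And>t. 0 < t \<Longrightarrow> t < 1 \<Longrightarrow> t * \<phi> t \<le> c * t powr (1 - 1/p) * (1 - ln (t/2)) powr \<beta>"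
    and p: "1 < p" and be: "0 < \<beta>" and c: "0 \<le> c" and u: "0 < u" "u < 1"
  shows "(\<integral>\<^sup>+ s. ennreal (\<phi> s) * indicator {0<..<u} s \<partial>lborel)
           \<le> ennreal (hardyK p \<beta> * c * u powr (1 - 1/p) * (1 - ln u) powr \<beta>)"
proof -
  define \<theta> where "\<theta> = (1 - 1/p) * ln 2"
  have th: "0 < \<theta>" unfolding \<theta>_def using p by (simp add: field_simps)
  define C0 where "C0 = exp (3*\<theta>/2 - \<beta> - \<beta> * ln (\<theta>/(2*\<beta>)))"
  define r where "r = exp (-\<theta>/2)"
  have r: "0 < r" "r < 1" unfolding r_def using th by auto
  define W where "W = c * u powr (1 - 1/p) * (1 - ln u) powr \<beta> * C0 * exp (-\<theta>)"
  have W: "0 \<le> W" unfolding W_def C0_def using c by simp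
  define t where "t k = u / 2 ^ Suc k" for k :: nat
  define J where "J k = {t k<..u / 2 ^ k}" for k :: nat
  have t: "0 < t k" "t k < 1" for k
  proof -
    show "0 < t k" unfolding t_def using u by simp
    have "(1::real) \<le> 2 ^ Suc k" by (rule one_le_power) simp
    then have "u / 2 ^ Suc k \<le> u" using u by (simp add: divide_le_eq)
    then show "t k < 1" unfolding t_def using u by linarith
  qed
  have step1: "ennreal (\<phi> s) * indicator {0<..<u} s \<le> (\<Sum>k. ennreal (\<phi> (t k)) * indicator (J k) s)" for s
  proof (cases "s \<in> {0<..<u}")
    case True
    then obtain k where k: "u / 2 ^ Suc k < s" "s \<le> u / 2 ^ k" using dyadic_cover[of s u] by auto
    have "\<phi> s \<le> \<phi> (t k)" by (rule anti) (use k t True u in \<open>auto simp: t_def\<close>)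
    then have "ennreal (\<phi> s) * indicator {0<..<u} s \<le> ennreal (\<phi> (t k)) * indicator (J k) s"
      using True k by (simp add: J_def t_def ennreal_leI)
    also have "\<dots> \<le> (\<Sum>k. ennreal (\<phi> (t k)) * indicator (J k) s)"
    proof -
      define F where "F = (\<lambda>k. ennreal (\<phi> (t k)) * indicator (J k) s)"
      have "sum F {k} \<le> suminf F" by (rule sum_le_suminf) auto
      then have "F k \<le> suminf F" by simp
      then show ?thesis unfolding F_def .
    qed
    finally show ?thesis .
  qed simp
  have "(\<integral>\<^sup>+ s. ennreal (\<phi> s) * indicator {0<..<u} s \<partial>lborel)
          \<le> (\<integral>\<^sup>+ s. (\<Sum>k. ennreal (\<phi> (t k)) * indicator (J k) s) \<partial>lborel)"
    by (rule nn_integral_mono) (rule step1)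
  also have "\<dots> = (\<Sum>k. \<integral>\<^sup>+ s. ennreal (\<phi> (t k)) * indicator (J k) s \<partial>lborel)"
    by (rule nn_integral_suminf) (simp add: J_def)
  also have "\<dots> = (\<Sum>k. ennreal (t k * \<phi> (t k)))"
  proof (rule suminf_cong)
    fix k
    have "u / 2 ^ k - t k = t k" unfolding t_def by (simp add: field_simps)
    moreover have "t k \<le> u / 2 ^ k" using t[of k] unfolding t_def by (simp add: field_simps)
    ultimately show "(\<integral>\<^sup>+ s. ennreal (\<phi> (t k)) * indicator (J k) s \<partial>lborel) = ennreal (t k * \<phi> (t k))"
      using t[of k] nn[of "t k"] unfolding J_def
      by (simp add: nn_integral_cmult_indicator ennreal_mult mult.commute)
  qed
  also have "\<dots> \<le> (\<Sum>k. ennreal (W * r ^ k))"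
  proof (rule suminf_le)
    fix k
    have "t k * \<phi> (t k) \<le> c * t k powr (1 - 1/p) * (1 - ln (t k/2)) powr \<beta>" by (rule bd[OF t])
    also have "t k powr (1 - 1/p) = u powr (1 - 1/p) * exp (-\<theta>) ^ Suc k"
      unfolding t_def \<theta>_def using tk_pow[OF u(1)] by simp
    also have "(1 - ln (t k/2)) powr \<beta> \<le> ((1 - ln u) * (real k + 3)) powr \<beta>"
    proof (rule powr_mono2)
      have "ln (t k / 2) < 0" using t[of k] by (intro ln_less_zero) auto
      then show "0 \<le> 1 - ln (t k / 2)" by simp
      show "1 - ln (t k / 2) \<le> (1 - ln u) * (real k + 3)" using log_bound[OF u, of k] by (simp add: t_def)
    qed (use be in simp)
    also have "((1 - ln u) * (real k + 3)) powr \<beta> = (1 - ln u) powr \<beta> * (real k + 3) powr \<beta>"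
      using u by (simp add: powr_mult)
    also have "(real k + 3) powr \<beta> \<le> C0 * exp (\<theta>/2) ^ k" unfolding C0_def by (rule poly_geo[OF th be])
    finally have "t k * \<phi> (t k) \<le> c * (u powr (1 - 1/p) * exp (-\<theta>) ^ Suc k) * ((1 - ln u) powr \<beta> * (C0 * exp (\<theta>/2) ^ k))"
      using c u by (simp add: mult_left_mono)
    also have "\<dots> = W * r ^ k"
    proof -
      have "exp (-\<theta>) ^ Suc k * exp (\<theta>/2) ^ k = exp (-\<theta>) * (exp (-\<theta>) * exp (\<theta>/2)) ^ k"
        by (simp add: power_mult_distrib)
      also have "exp (-\<theta>) * exp (\<theta>/2) = r" unfolding r_def by (simp add: exp_add[symmetric])
      finally have "exp (-\<theta>) ^ Suc k * exp (\<theta>/2) ^ k = exp (-\<theta>) * r ^ k" .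
      then show ?thesis unfolding W_def by (simp add: algebra_simps)
    qed
    finally show "ennreal (t k * \<phi> (t k)) \<le> ennreal (W * r ^ k)" by (rule ennreal_leI)
  qed auto
  also have "\<dots> = ennreal (\<Sum>k. W * r ^ k)"
    by (rule suminf_ennreal2) (use W r in \<open>auto intro: summable_mult summable_geometric\<close>)
  also have "(\<Sum>k. W * r ^ k) = W / (1 - r)"
    using r by (simp add: suminf_mult summable_geometric suminf_geometric divide_simps)
  also have "W / (1 - r) = hardyK p \<beta> * c * u powr (1 - 1/p) * (1 - ln u) powr \<beta>"
    unfolding W_def hardyK_def Let_def \<theta>_def[symmetric] C0_def r_def by (simp add: field_simps)
  finally show ?thesis .
qed


lemma enn_powr_mono:
  assumes "x \<le> y" "0 \<le> q"
  shows "enn_powr x q \<le> enn_powr y q"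
proof (cases "y = \<infinity>")
  case True then show ?thesis by (simp add: enn_powr_def)
next
  case False
  then have "x \<noteq> \<infinity>" using assms by (auto simp: top_unique)
  then show ?thesis using False assms unfolding enn_powr_def
    by (auto intro!: ennreal_leI powr_mono2 enn2real_mono simp: less_top)
qed

lemma powr_sum_le:
  fixes x y r :: real
  assumes "0 \<le> x" "0 \<le> y" "0 < r" "r \<le> 1"
  shows "(x + y) powr r \<le> 2 * (x powr r + y powr r)"
proof -
  have "(x + y) powr r \<le> (2 * max x y) powr r"
    by (rule powr_mono2) (use assms in auto)
  also have "\<dots> = 2 powr r * max x y powr r" by (rule powr_mult)
  also have "2 powr r \<le> 2 powr (1::real)" by (rule powr_mono) (use assms in auto)
  then have "2 powr r * max x y powr r \<le> 2 * max x y powr r" by (intro mult_right_mono) auto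
  also have "max x y powr r \<le> x powr r + y powr r"
    by (cases "x \<le> y") (auto simp: max_def)
  finally show ?thesis by simp
qed

lemma root_bound:
  fixes y Z p :: real
  assumes "0 \<le> y" "y powr p \<le> Z" "0 < p"
  shows "y \<le> Z powr (1/p)"
proof -
  have "(y powr p) powr (1/p) \<le> Z powr (1/p)" by (rule powr_mono2) (use assms in auto)
  then show ?thesis using assms by (simp add: powr_powr)
qed

context
  fixes \<Omega> :: "'a::euclidean_space set"
  assumes Om: "\<Omega> \<in> sets lebesgue" and Om1: "emeasure lebesgue \<Omega> = 1"
begin

lemma K_upper:
  fixes f :: "'a \<Rightarrow> real" and p \<tau> a :: real
  assumes f: "f \<in> borel_measurable (lebesgue_on \<Omega>)" and a: "0 \<le> a"
  shows "K_fun \<Omega> p f \<tau> \<le> (\<integral>\<^sup>+x. ennreal (max (\<bar>f x\<bar> - a) 0) \<partial>lebesgue_on \<Omega>) +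
            ennreal \<tau> * enn_powr (\<integral>\<^sup>+x. ennreal (min \<bar>f x\<bar> a powr p) \<partial>lebesgue_on \<Omega>) (1/p)"
proof -
  define g1 where "g1 x = sgn (f x) * min \<bar>f x\<bar> a" for x
  define g0 where "g0 x = f x - g1 x" for x
  have fm [measurable]: "f \<in> borel_measurable (lebesgue_on \<Omega>)" by (rule f)
  have m1: "g1 \<in> borel_measurable (lebesgue_on \<Omega>)" unfolding g1_def by measurable
  have m0: "g0 \<in> borel_measurable (lebesgue_on \<Omega>)" unfolding g0_def using m1 by measurable
  have abs1: "\<bar>g1 x\<bar> = min \<bar>f x\<bar> a" for x
    unfolding g1_def using a by (auto simp: sgn_if min_def)
  have abs0: "\<bar>g0 x\<bar> = max (\<bar>f x\<bar> - a) 0" for x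
    unfolding g0_def g1_def using a
    by (cases "f x > 0"; cases "f x < 0"; cases "\<bar>f x\<bar> \<le> a") (auto simp: min_def max_def sgn_if)
  have "K_fun \<Omega> p f \<tau> \<le> Lq_norm \<Omega> 1 g0 + ennreal \<tau> * Lq_norm \<Omega> p g1"
    unfolding K_fun_def by (rule INF_lower2[of "(g0, g1)"]) (auto simp: g0_def m0 m1)
  also have "\<dots> = (\<integral>\<^sup>+x. ennreal (max (\<bar>f x\<bar> - a) 0) \<partial>lebesgue_on \<Omega>) +
            ennreal \<tau> * enn_powr (\<integral>\<^sup>+x. ennreal (min \<bar>f x\<bar> a powr p) \<partial>lebesgue_on \<Omega>) (1/p)"
    unfolding Lq_norm_def by (simp add: abs0 abs1 enn_powr_1)
  finally show ?thesis .
qed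

lemma gn_F:
  fixes f :: "'a \<Rightarrow> real" and p \<alpha> n t :: real
  assumes p: "1 < p" and n: "0 \<le> n" and G: "grand_norm \<Omega> p \<alpha> f \<le> ennreal n"
    and t: "0 < t" "t < 1"
  shows "(\<integral>\<^sup>+ s\<in>{t..1}. ennreal (decr_rearr \<Omega> f s powr p) \<partial>lborel) \<le> ennreal ((1 - ln t) powr \<alpha> * n powr p)"
proof -
  define Ft where "Ft = (\<integral>\<^sup>+ s\<in>{t..1}. ennreal (decr_rearr \<Omega> f s powr p) \<partial>lborel)"
  define L where "L = 1 - ln t"
  have L: "1 < L" unfolding L_def using t by simp
  define w where "w = L powr (-\<alpha>/p)"
  have w: "0 < w" unfolding w_def using L by simp
  have "ennreal w * enn_powr Ft (1/p) \<le> grand_norm \<Omega> p \<alpha> f"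
    unfolding grand_norm_def w_def L_def Ft_def by (rule SUP_upper) (use t in simp)
  also note G
  finally have wn: "ennreal w * enn_powr Ft (1/p) \<le> ennreal n" .
  have fin: "Ft \<noteq> \<infinity>"
  proof
    assume "Ft = \<infinity>"
    then have "ennreal w * enn_powr Ft (1/p) = \<infinity>" using w by (simp add: enn_powr_def ennreal_mult_eq_top_iff)
    then show False using wn by (simp add: top_unique)
  qed
  define F where "F = enn2real Ft"
  have F: "Ft = ennreal F" "0 \<le> F" unfolding F_def using fin by (auto simp: less_top)
  have "ennreal (w * F powr (1/p)) \<le> ennreal n"
    using wn F w by (simp add: enn_powr_ennreal ennreal_mult)
  then have "w * F powr (1/p) \<le> n" using n by simp
  then have "F powr (1/p) \<le> n / w" using w by (simp add: field_simps)
  also have "n / w = n * L powr (\<alpha>/p)" unfolding w_def using L by (simp add: powr_minus_divide divide_simps)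
  finally have "(F powr (1/p)) powr p \<le> (n * L powr (\<alpha>/p)) powr p"
    by (intro powr_mono2) (use p in auto)
  then have "F \<le> n powr p * L powr \<alpha>"
    using F p L n by (simp add: powr_powr powr_mult)
  then show ?thesis unfolding Ft_def[symmetric] L_def[symmetric] using F
    by (simp add: mult.commute)
qed

lemma fs_bound:
  fixes f :: "'a \<Rightarrow> real" and p \<alpha> n t :: real
  assumes f: "f \<in> borel_measurable (lebesgue_on \<Omega>)"
    and p: "1 < p" and n: "0 \<le> n" and G: "grand_norm \<Omega> p \<alpha> f \<le> ennreal n"
    and t: "0 < t" "t < 1"
  shows "t * decr_rearr \<Omega> f t \<le> (2 powr (1/p) * n) * t powr (1 - 1/p) * (1 - ln (t/2)) powr (\<alpha>/p)"
proof -
  define a where "a = decr_rearr \<Omega> f t"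
  have a: "0 \<le> a" unfolding a_def by (rule dr_nonneg[OF Om Om1 f t(1)])
  define Q where "Q = (1 - ln (t/2)) powr \<alpha> * n powr p"
  have Q: "0 \<le> Q" unfolding Q_def by simp
  have "ennreal (a powr p) * ennreal (t/2) = (\<integral>\<^sup>+ s. ennreal (a powr p) * indicator {t/2<..<t} s \<partial>lborel)"
    using t by (simp add: nn_integral_cmult_indicator)
  also have "\<dots> \<le> (\<integral>\<^sup>+ s\<in>{t/2..1}. ennreal (decr_rearr \<Omega> f s powr p) \<partial>lborel)"
  proof (rule nn_integral_mono)
    fix s
    show "ennreal (a powr p) * indicator {t/2<..<t} s \<le> ennreal (decr_rearr \<Omega> f s powr p) * indicator {t/2..1} s"
    proof (cases "s \<in> {t/2<..<t}")
      case True
      then have s: "0 < s" "s \<le> t" using t by auto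
      have "a \<le> decr_rearr \<Omega> f s" unfolding a_def by (rule dr_antimono[OF Om Om1 f s])
      then have "a powr p \<le> decr_rearr \<Omega> f s powr p" by (intro powr_mono2) (use a p in auto)
      then show ?thesis using True t by (auto simp: indicator_def intro: ennreal_leI)
    qed simp
  qed
  also have "\<dots> \<le> ennreal Q" unfolding Q_def by (rule gn_F[OF p n G]) (use t in auto)
  finally have "ennreal (a powr p) * ennreal (t/2) \<le> ennreal Q" .
  moreover have "ennreal (a powr p) * ennreal (t/2) = ennreal (a powr p * (t/2))"
    using t by (subst ennreal_mult) auto
  ultimately have "ennreal (a powr p * (t/2)) \<le> ennreal Q" by simp
  then have aQ: "a powr p * (t/2) \<le> Q" using Q by simp
  define y where "y = t * a"
  have y: "0 \<le> y" unfolding y_def using a t by simp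
  have "y powr p = t powr p * a powr p" unfolding y_def by (rule powr_mult)
  also have "t powr p = t powr (p - 1) * t" using t by (simp add: powr_diff)
  also have "t powr (p - 1) * t * a powr p = 2 * t powr (p - 1) * (a powr p * (t/2))" by simp
  also have "\<dots> \<le> 2 * t powr (p - 1) * Q" using aQ by (intro mult_left_mono) auto
  finally have "y \<le> (2 * t powr (p - 1) * Q) powr (1/p)" by (intro root_bound) (use y p in auto)
  also have "(2 * t powr (p - 1) * Q) powr (1/p) = 2 powr (1/p) * t powr ((p - 1) / p) * ((1 - ln (t/2)) powr (\<alpha>/p) * n)"
  proof -
    have "ln (t/2) < 0" using t by (intro ln_less_zero) auto
    then show ?thesis unfolding Q_def using p n t by (simp add: powr_mult powr_powr)
  qed
  also have "(p - 1) / p = 1 - 1/p" using p by (simp add: field_simps)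
  finally show ?thesis unfolding y_def a_def by (simp add: algebra_simps)
qed

end


definition CA :: "real \<Rightarrow> real \<Rightarrow> real" where
  "CA p \<alpha> = (p/(p-1)) powr (\<alpha>/p) * (3 * hardyK p (\<alpha>/p) * 2 powr (1/p) + 2)"

lemma CA_pos: "1 < p \<Longrightarrow> 0 < CA p \<alpha>"
  unfolding CA_def using hardyK_pos[of p "\<alpha>/p"] by (simp add: add_pos_nonneg)

declare ind_Lm[measurable del]

context
  fixes \<Omega> :: "'a::euclidean_space set"
  assumes Om: "\<Omega> \<in> sets lebesgue" and Om1: "emeasure lebesgue \<Omega> = 1"
begin

lemmas ind_Lm' [measurable] = ind_Lm[OF Om Om1]

lemma dirA_K:
  fixes f :: "'a \<Rightarrow> real" and p \<alpha> n \<tau> :: real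
  assumes f: "f \<in> borel_measurable (lebesgue_on \<Omega>)"
    and p: "1 < p" and al: "0 < \<alpha>" and n: "0 \<le> n" and G: "grand_norm \<Omega> p \<alpha> f \<le> ennreal n"
    and \<tau>: "0 < \<tau>" "\<tau> < 1"
  shows "K_fun \<Omega> p f \<tau> \<le> ennreal (\<tau> * (1 - ln (\<tau> powr (p/(p-1)))) powr (\<alpha>/p) * n * (3 * hardyK p (\<alpha>/p) * 2 powr (1/p) + 2))"
proof -
  define \<beta> where "\<beta> = \<alpha>/p"
  have be: "0 < \<beta>" unfolding \<beta>_def using al p by simp
  define u where "u = \<tau> powr (p/(p-1))"
  have "\<tau> powr (p/(p-1)) < 1 powr (p/(p-1))" by (rule powr_less_mono2) (use \<tau> p in auto)
  then have u: "0 < u" "u < 1" unfolding u_def using \<tau> p by auto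
  have tu: "\<tau> = u powr (1 - 1/p)" unfolding u_def using \<tau> p by (simp add: powr_powr field_simps)
  have uu: "\<tau> * u powr (1/p) = u"
    unfolding tu using u by (simp add: powr_add[symmetric])
  define a where "a = decr_rearr \<Omega> f u"
  have a: "0 \<le> a" unfolding a_def by (rule dr_nonneg[OF Om Om1 f u(1)])
  have fsm [measurable]: "decr_rearr \<Omega> f \<in> borel_measurable Lm" by (rule dr_borelL[OF Om Om1 f])
  define FR where "FR = (1 - ln u) powr \<alpha> * n powr p"
  define hK where "hK = hardyK p \<beta>"
  have hK: "0 < hK" unfolding hK_def using hardyK_pos[OF p] by simp
  define PR where "PR = hK * (2 powr (1/p) * n) * u powr (1 - 1/p) * (1 - ln u) powr \<beta>"
  define Fu where "Fu = (\<integral>\<^sup>+ s\<in>{u..1}. ennreal (decr_rearr \<Omega> f s powr p) \<partial>lborel)"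
  have FuR: "Fu \<le> ennreal FR" unfolding Fu_def FR_def by (rule gn_F[OF Om Om1 p n G u])
  define Pu where "Pu = (\<integral>\<^sup>+ s. ennreal (decr_rearr \<Omega> f s) * indicator {0<..<u} s \<partial>lborel)"
  have PuR: "Pu \<le> ennreal PR"
    unfolding Pu_def PR_def hK_def
  proof (rule hardy[OF _ _ _ p be _ u])
    show "\<And>s t. 0 < s \<Longrightarrow> s \<le> t \<Longrightarrow> t < 1 \<Longrightarrow> decr_rearr \<Omega> f t \<le> decr_rearr \<Omega> f s"
      by (rule dr_antimono[OF Om Om1 f])
    show "\<And>t. 0 < t \<Longrightarrow> t < 1 \<Longrightarrow> 0 \<le> decr_rearr \<Omega> f t"
      by (rule dr_nonneg[OF Om Om1 f])
    show "\<And>t. 0 < t \<Longrightarrow> t < 1 \<Longrightarrow> t * decr_rearr \<Omega> f t \<le> 2 powr (1/p) * n * t powr (1 - 1/p) * (1 - ln (t/2)) powr \<beta>"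
      unfolding \<beta>_def by (rule fs_bound[OF Om Om1 f p n G])
    show "0 \<le> 2 powr (1/p) * n" using n by simp
  qed
  have Pu_L: "(\<integral>\<^sup>+ s. ennreal (decr_rearr \<Omega> f s) * indicator {0<..<u} s \<partial>Lm) = Pu"
    unfolding Pu_def using u
    by (subst nn_integral_restrict_space) (auto intro!: nn_integral_cong simp: indicator_def)
  have phi1: "(\<lambda>y. ennreal (max (y - a) 0)) \<in> borel_measurable borel" by measurable
  have phi2: "(\<lambda>y. ennreal (min y a powr p)) \<in> borel_measurable borel" by measurable
  have I1: "(\<integral>\<^sup>+x. ennreal (max (\<bar>f x\<bar> - a) 0) \<partial>lebesgue_on \<Omega>) \<le> Pu"
  proof -
    have "(\<integral>\<^sup>+x. ennreal (max (\<bar>f x\<bar> - a) 0) \<partial>lebesgue_on \<Omega>) =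
          (\<integral>\<^sup>+ s. ennreal (max (decr_rearr \<Omega> f s - a) 0) \<partial>Lm)"
      by (rule equimeasL[OF Om Om1 f phi1])
    also have "\<dots> \<le> (\<integral>\<^sup>+ s. ennreal (decr_rearr \<Omega> f s) * indicator {0<..<u} s \<partial>Lm)"
    proof (rule nn_integral_mono)
      fix s assume "s \<in> space Lm"
      then have s: "0 < s" "s < 1" by auto
      show "ennreal (max (decr_rearr \<Omega> f s - a) 0) \<le> ennreal (decr_rearr \<Omega> f s) * indicator {0<..<u} s"
      proof (cases "s < u")
        case True
        then show ?thesis using a s dr_nonneg[OF Om Om1 f s(1)] by (auto intro!: ennreal_leI)
      next
        case False
        have "decr_rearr \<Omega> f s \<le> a" unfolding a_def
          by (rule dr_antimono[OF Om Om1 f u(1)]) (use False in simp)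
        then show ?thesis by simp
      qed
    qed
    finally show ?thesis using Pu_L by simp
  qed
  have I2: "(\<integral>\<^sup>+x. ennreal (min \<bar>f x\<bar> a powr p) \<partial>lebesgue_on \<Omega>) \<le> Fu + ennreal (a powr p) * ennreal u"
  proof -
    have uL: "{0<..<u} \<in> sets Lm" by (subst sets_restrict_space_iff) (use u in auto)
    have H2: "(\<integral>\<^sup>+ s. ennreal (a powr p) * indicator {0<..<u} s \<partial>Lm) = ennreal (a powr p) * ennreal u"
      using u by (simp add: nn_integral_cmult_indicator[OF uL] emeasure_Lm[OF Om Om1])
    have Fu_L: "Fu = (\<integral>\<^sup>+ s. ennreal (decr_rearr \<Omega> f s powr p) * indicator {u..<1} s \<partial>Lm)"
      unfolding Fu_def by (rule grand_integrand_L[OF Om Om1 f u(1)]) (use p in simp)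
    have "(\<integral>\<^sup>+x. ennreal (min \<bar>f x\<bar> a powr p) \<partial>lebesgue_on \<Omega>) =
          (\<integral>\<^sup>+ s. ennreal (min (decr_rearr \<Omega> f s) a powr p) \<partial>Lm)"
      by (rule equimeasL[OF Om Om1 f phi2])
    also have "\<dots> \<le> (\<integral>\<^sup>+ s. ennreal (decr_rearr \<Omega> f s powr p) * indicator {u..<1} s
              + ennreal (a powr p) * indicator {0<..<u} s \<partial>Lm)"
    proof (rule nn_integral_mono)
      fix s assume "s \<in> space Lm"
      then have s: "0 < s" "s < 1" by auto
      show "ennreal (min (decr_rearr \<Omega> f s) a powr p) \<le> ennreal (decr_rearr \<Omega> f s powr p) * indicator {u..<1} s
              + ennreal (a powr p) * indicator {0<..<u} s"
      proof (cases "s < u")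
        case True
        have "min (decr_rearr \<Omega> f s) a powr p \<le> a powr p"
          by (rule powr_mono2) (use a p dr_nonneg[OF Om Om1 f s(1)] in auto)
        then show ?thesis using True s by (auto simp: indicator_def intro: ennreal_leI)
      next
        case False
        have "decr_rearr \<Omega> f s \<le> a" unfolding a_def
          by (rule dr_antimono[OF Om Om1 f u(1)]) (use False in simp)
        then have "min (decr_rearr \<Omega> f s) a = decr_rearr \<Omega> f s" by simp
        then show ?thesis using False s by (simp add: indicator_def)
      qed
    qed
    also have "\<dots> = Fu + ennreal (a powr p) * ennreal u"
      unfolding Fu_L H2[symmetric] by (rule nn_integral_add) measurable
    finally show ?thesis .
  qed
  have uaP: "u * a \<le> PR"
  proof -
    have "ennreal a * ennreal u = (\<integral>\<^sup>+ s. ennreal a * indicator {0<..<u} s \<partial>lborel)"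
      using u by (simp add: nn_integral_cmult_indicator)
    also have "\<dots> \<le> Pu" unfolding Pu_def
    proof (rule nn_integral_mono)
      fix s
      show "ennreal a * indicator {0<..<u} s \<le> ennreal (decr_rearr \<Omega> f s) * indicator {0<..<u} s"
      proof (cases "s \<in> {0<..<u}")
        case True
        then have "a \<le> decr_rearr \<Omega> f s" unfolding a_def
          by (intro dr_antimono[OF Om Om1 f]) auto
        then show ?thesis using True by (simp add: ennreal_leI)
      qed simp
    qed
    also note PuR
    finally have "ennreal (a * u) \<le> ennreal PR" using a u by (simp add: ennreal_mult)
    then show ?thesis using hK n u by (simp add: PR_def mult.commute)
  qed
  define L where "L = 1 - ln u"
  have L: "1 < L" unfolding L_def using u by simp
  have FRp: "FR powr (1/p) = L powr \<beta> * n"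
    unfolding FR_def L_def[symmetric] \<beta>_def using L n p by (simp add: powr_mult powr_powr)
  have ap: "(a powr p * u) powr (1/p) = a * u powr (1/p)"
    using a u p by (simp add: powr_mult powr_powr)
  have R1: "\<tau> * (FR + a powr p * u) powr (1/p) \<le> 2 * \<tau> * L powr \<beta> * n + 2 * PR"
  proof -
    have "(FR + a powr p * u) powr (1/p) \<le> 2 * (FR powr (1/p) + (a powr p * u) powr (1/p))"
      by (rule powr_sum_le) (use u p in \<open>auto simp: FR_def\<close>)
    then have "\<tau> * (FR + a powr p * u) powr (1/p) \<le> \<tau> * (2 * (L powr \<beta> * n + a * u powr (1/p)))"
      using \<tau> unfolding FRp ap by (intro mult_left_mono) auto
    also have "\<dots> = 2 * \<tau> * L powr \<beta> * n + 2 * (\<tau> * u powr (1/p)) * a" by (simp add: algebra_simps)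
    also have "\<dots> = 2 * \<tau> * L powr \<beta> * n + 2 * (u * a)" unfolding uu by simp
    also have "\<dots> \<le> 2 * \<tau> * L powr \<beta> * n + 2 * PR" using uaP by simp
    finally show ?thesis .
  qed
  have PRe: "PR = \<tau> * L powr \<beta> * n * (hK * 2 powr (1/p))"
    unfolding PR_def L_def[symmetric] tu[symmetric] by (simp add: algebra_simps)
  have PR0: "0 \<le> PR" unfolding PRe using \<tau> n hK by simp
  have "K_fun \<Omega> p f \<tau> \<le> (\<integral>\<^sup>+x. ennreal (max (\<bar>f x\<bar> - a) 0) \<partial>lebesgue_on \<Omega>) +
            ennreal \<tau> * enn_powr (\<integral>\<^sup>+x. ennreal (min \<bar>f x\<bar> a powr p) \<partial>lebesgue_on \<Omega>) (1/p)"
    by (rule K_upper[OF Om Om1 f a])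
  also have "\<dots> \<le> ennreal PR + ennreal \<tau> * enn_powr (ennreal (FR + a powr p * u)) (1/p)"
  proof (intro add_mono mult_left_mono enn_powr_mono)
    show "(\<integral>\<^sup>+x. ennreal (max (\<bar>f x\<bar> - a) 0) \<partial>lebesgue_on \<Omega>) \<le> ennreal PR" using I1 PuR by simp
    have "Fu + ennreal (a powr p) * ennreal u \<le> ennreal FR + ennreal (a powr p * u)"
      using FuR u by (simp add: ennreal_mult add_mono)
    also have "\<dots> = ennreal (FR + a powr p * u)" using u by (simp add: FR_def)
    finally show "(\<integral>\<^sup>+x. ennreal (min \<bar>f x\<bar> a powr p) \<partial>lebesgue_on \<Omega>) \<le> ennreal (FR + a powr p * u)"
      using I2 by simp
  qed (use p in auto)
  also have "\<dots> = ennreal (PR + \<tau> * (FR + a powr p * u) powr (1/p))"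
  proof -
    have FR0: "0 \<le> FR + a powr p * u" using u unfolding FR_def by simp
    have "enn_powr (ennreal (FR + a powr p * u)) (1/p) = ennreal ((FR + a powr p * u) powr (1/p))"
      by (rule enn_powr_ennreal[OF FR0])
    then show ?thesis using PR0 \<tau> by (simp add: ennreal_mult)
  qed
  also have "\<dots> \<le> ennreal (\<tau> * L powr \<beta> * n * (3 * hK * 2 powr (1/p) + 2))"
  proof (rule ennreal_leI)
    have "PR + \<tau> * (FR + a powr p * u) powr (1/p) \<le> 3 * PR + 2 * \<tau> * L powr \<beta> * n" using R1 by simp
    also have "\<dots> = \<tau> * L powr \<beta> * n * (3 * hK * 2 powr (1/p) + 2)" unfolding PRe by (simp add: algebra_simps)
    finally show "PR + \<tau> * (FR + a powr p * u) powr (1/p) \<le> \<tau> * L powr \<beta> * n * (3 * hK * 2 powr (1/p) + 2)" .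
  qed
  finally show ?thesis unfolding L_def u_def \<beta>_def hK_def .
qed

end


declare ind_Lm[measurable del]

context
  fixes \<Omega> :: "'a::euclidean_space set"
  assumes Om: "\<Omega> \<in> sets lebesgue" and Om1: "emeasure lebesgue \<Omega> = 1"
begin

lemma lowK:
  fixes f :: "'a \<Rightarrow> real" and p u :: real
  assumes f: "f \<in> borel_measurable (lebesgue_on \<Omega>)" and p: "1 < p" and u: "0 < u" "u < 1"
  shows "ennreal (1/4) * (ennreal (u powr ((p-1)/p)) * enn_powr (\<integral>\<^sup>+ s\<in>{u..1}. ennreal (decr_rearr \<Omega> f s powr p) \<partial>lborel) (1/p))
           \<le> K_fun \<Omega> p f (u powr ((p-1)/p))"
  unfolding K_fun_def
proof (rule INF_greatest, clarify)
  fix g0 g1 assume g0: "g0 \<in> borel_measurable (lebesgue_on \<Omega>)" and g1: "g1 \<in> borel_measurable (lebesgue_on \<Omega>)"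
    and sum: "\<forall>x\<in>\<Omega>. f x = g0 x + g1 x"
  let ?V = "Lq_norm \<Omega> 1 g0 + ennreal (u powr ((p-1)/p)) * Lq_norm \<Omega> p g1"
  have "ennreal (u powr ((p-1)/p)) * enn_powr (\<integral>\<^sup>+ s\<in>{u..1}. ennreal (decr_rearr \<Omega> f s powr p) \<partial>lborel) (1/p) \<le> 4 * ?V"
    by (rule lower_core[OF Om Om1 f g0 g1 sum u p])
  then have "ennreal (1/4) * (ennreal (u powr ((p-1)/p)) * enn_powr (\<integral>\<^sup>+ s\<in>{u..1}. ennreal (decr_rearr \<Omega> f s powr p) \<partial>lborel) (1/p))
      \<le> ennreal (1/4) * (4 * ?V)" by (rule mult_left_mono) simp
  also have "ennreal (1/4) * (4 * ?V) = ?V"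
  proof -
    have "ennreal (1/4) * 4 = ennreal (1/4) * ennreal 4" by simp
    also have "\<dots> = ennreal (1/4 * 4)" by (rule ennreal_mult[symmetric]) auto
    finally have "ennreal (1/4) * 4 = 1" by simp
    then show ?thesis by (simp only: mult.assoc[symmetric] mult_1)
  qed
  finally show "ennreal (1/4) * (ennreal (u powr ((p-1)/p)) * enn_powr (\<integral>\<^sup>+ s\<in>{u..1}. ennreal (decr_rearr \<Omega> f s powr p) \<partial>lborel) (1/p))
      \<le> ?V" .
qed

lemma dirB:
  fixes f :: "'a \<Rightarrow> real" and p \<alpha> :: real
  assumes f: "f \<in> borel_measurable (lebesgue_on \<Omega>)" and p: "1 < p" and al: "0 < \<alpha>"
  shows "ennreal (1/4) * grand_norm \<Omega> p \<alpha> f \<le> interp_norm \<Omega> p (-\<alpha>/p) f"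
  unfolding grand_norm_def SUP_mult_left_ennreal
proof (rule SUP_least)
  fix u :: real assume "u \<in> {0<..<1}"
  then have u: "0 < u" "u < 1" by auto
  define \<tau> where "\<tau> = u powr ((p-1)/p)"
  have "\<tau> < 1 powr ((p-1)/p)" unfolding \<tau>_def by (rule powr_less_mono2) (use u p in auto)
  then have \<tau>: "0 < \<tau>" "\<tau> < 1" unfolding \<tau>_def using u by auto
  have ut: "u \<le> \<tau>"
  proof -
    have "u powr 1 \<le> u powr ((p-1)/p)" by (rule powr_mono') (use u p in auto)
    then show ?thesis unfolding \<tau>_def using u by simp
  qed
  define X where "X = enn_powr (\<integral>\<^sup>+ s\<in>{u..1}. ennreal (decr_rearr \<Omega> f s powr p) \<partial>lborel) (1/p)"
  define wu where "wu = (1 - ln u) powr (-\<alpha>/p)"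
  define wt where "wt = (1 - ln \<tau>) powr (-\<alpha>/p)"
  have wut: "wu \<le> wt" unfolding wu_def wt_def
  proof (rule powr_mono2')
    show "-\<alpha>/p \<le> 0" using al p by simp
    have "ln \<tau> < 0" using \<tau> by (intro ln_less_zero) auto
    then show "0 < 1 - ln \<tau>" by simp
    show "1 - ln \<tau> \<le> 1 - ln u" using ut u by simp
  qed
  have wt0: "0 \<le> wt" unfolding wt_def by simp
  have "ennreal (1/4) * (ennreal wu * X) \<le> ennreal (1/4) * (ennreal wt * X)"
    using wut by (intro mult_left_mono mult_right_mono ennreal_leI) auto
  also have "ennreal wt = ennreal (\<tau> powr (-1) * wt) * ennreal \<tau>"
  proof -
    have "\<tau> powr (-1) * wt * \<tau> = wt" using \<tau> by (simp add: powr_minus field_simps)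
    then show ?thesis using \<tau> wt0 by (simp add: ennreal_mult[symmetric])
  qed
  also have "ennreal (1/4) * (ennreal (\<tau> powr (-1) * wt) * ennreal \<tau> * X) =
      ennreal (\<tau> powr (-1) * wt) * (ennreal (1/4) * (ennreal \<tau> * X))" by (simp add: ac_simps)
  also have "\<dots> \<le> ennreal (\<tau> powr (-1) * wt) * K_fun \<Omega> p f \<tau>"
    unfolding X_def \<tau>_def by (intro mult_left_mono lowK[OF f p u]) auto
  also have "\<dots> \<le> interp_norm \<Omega> p (-\<alpha>/p) f"
    unfolding interp_norm_def wt_def by (rule SUP_upper2[of \<tau>]) (use \<tau> in auto)
  finally show "ennreal (1/4) * (ennreal ((1 - ln u) powr (-\<alpha>/p)) *
      enn_powr (\<integral>\<^sup>+ s\<in>{u..1}. ennreal (decr_rearr \<Omega> f s powr p) \<partial>lborel) (1/p))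
      \<le> interp_norm \<Omega> p (-\<alpha>/p) f" unfolding wu_def X_def .
qed

lemma dirA:
  fixes f :: "'a \<Rightarrow> real" and p \<alpha> :: real
  assumes f: "f \<in> borel_measurable (lebesgue_on \<Omega>)" and p: "1 < p" and al: "0 < \<alpha>"
  shows "interp_norm \<Omega> p (-\<alpha>/p) f \<le> ennreal (CA p \<alpha>) * grand_norm \<Omega> p \<alpha> f"
proof (cases "grand_norm \<Omega> p \<alpha> f = \<infinity>")
  case True
  then show ?thesis using CA_pos[OF p, of \<alpha>] by (simp add: ennreal_mult_top)
next
  case False
  define n where "n = enn2real (grand_norm \<Omega> p \<alpha> f)"
  have N: "grand_norm \<Omega> p \<alpha> f = ennreal n" "0 \<le> n" unfolding n_def using False by (auto simp: less_top)
  have G: "grand_norm \<Omega> p \<alpha> f \<le> ennreal n" using N by simp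
  define M where "M = 3 * hardyK p (\<alpha>/p) * 2 powr (1/p) + 2"
  have M: "0 \<le> M" unfolding M_def using hardyK_pos[OF p, of "\<alpha>/p"] by simp
  define q where "q = p/(p-1)"
  have q: "1 \<le> q" unfolding q_def using p by simp
  have CA: "CA p \<alpha> = q powr (\<alpha>/p) * M" unfolding CA_def q_def M_def ..
  show ?thesis unfolding interp_norm_def
  proof (rule SUP_least)
    fix \<tau> :: real assume "\<tau> \<in> {0<..<1}"
    then have \<tau>: "0 < \<tau>" "\<tau> < 1" by auto
    define y where "y = 1 - ln \<tau>"
    have y: "1 < y" unfolding y_def using \<tau> by simp
    define L where "L = 1 - ln (\<tau> powr (p/(p-1)))"
    have Le: "L = 1 + q * (y - 1)" unfolding L_def y_def q_def using \<tau> by simp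
    have L1: "1 \<le> L" unfolding Le using q y by simp
    have Lq: "L / y \<le> q" unfolding Le using q y by (simp add: field_simps)
    have wL: "y powr (-\<alpha>/p) * L powr (\<alpha>/p) \<le> q powr (\<alpha>/p)"
    proof -
      have yi: "y powr (-\<alpha>/p) = inverse (y powr (\<alpha>/p))" using powr_minus[of y "\<alpha>/p"] by simp
      have "(L / y) powr (\<alpha>/p) = L powr (\<alpha>/p) / y powr (\<alpha>/p)" by (rule powr_divide)
      then have "y powr (-\<alpha>/p) * L powr (\<alpha>/p) = (L / y) powr (\<alpha>/p)"
        unfolding yi by (simp add: divide_inverse mult.commute)
      also have "\<dots> \<le> q powr (\<alpha>/p)" by (rule powr_mono2) (use al p Lq y L1 in auto)
      finally show ?thesis .
    qed
    have "ennreal (\<tau> powr (-1) * (1 - ln \<tau>) powr (-\<alpha>/p)) * K_fun \<Omega> p f \<tau>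
        \<le> ennreal (\<tau> powr (-1) * y powr (-\<alpha>/p)) * ennreal (\<tau> * L powr (\<alpha>/p) * n * M)"
      unfolding y_def L_def M_def by (intro mult_left_mono dirA_K[OF Om Om1 f p al N(2) G \<tau>]) auto
    also have "\<dots> = ennreal (\<tau> powr (-1) * \<tau> * (y powr (-\<alpha>/p) * L powr (\<alpha>/p)) * n * M)"
      using \<tau> y N M by (simp add: ennreal_mult[symmetric] ac_simps)
    also have "\<tau> powr (-1) * \<tau> = 1" using \<tau> by (simp add: powr_minus)
    also have "ennreal (1 * (y powr (-\<alpha>/p) * L powr (\<alpha>/p)) * n * M) \<le> ennreal (q powr (\<alpha>/p) * n * M)"
      using wL N M by (intro ennreal_leI mult_right_mono) auto
    also have "\<dots> = ennreal (CA p \<alpha>) * grand_norm \<Omega> p \<alpha> f"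
      unfolding CA N(1) using N M by (simp add: ennreal_mult[symmetric] ac_simps)
    finally show "ennreal (\<tau> powr (-1) * (1 - ln \<tau>) powr (-\<alpha>/p)) * K_fun \<Omega> p f \<tau>
        \<le> ennreal (CA p \<alpha>) * grand_norm \<Omega> p \<alpha> f" .
  qed
qed

end


theorem lemma3p2:
  fixes \<Omega> :: "'a::euclidean_space set" and p \<alpha> :: real
  assumes "open \<Omega>" and "bounded \<Omega>" and "emeasure lebesgue \<Omega> = 1"
    and "1 < p" and "0 < \<alpha>"
  shows "\<exists>c C. 0 < c \<and> 0 < C \<and>
           (\<forall>f \<in> borel_measurable (lebesgue_on \<Omega>).
              ennreal c * grand_norm \<Omega> p \<alpha> f \<le> interp_norm \<Omega> p (-\<alpha>/p) f \<and>
              interp_norm \<Omega> p (-\<alpha>/p) f \<le> ennreal C * grand_norm \<Omega> p \<alpha> f)"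
proof -
  have Om: "\<Omega> \<in> sets lebesgue" using lmeasurable_open[OF assms(2) assms(1)] by auto
  have "0 < (1/4::real)" by simp
  moreover have "0 < CA p \<alpha>" by (rule CA_pos[OF assms(4)])
  moreover have "\<forall>f \<in> borel_measurable (lebesgue_on \<Omega>).
              ennreal (1/4) * grand_norm \<Omega> p \<alpha> f \<le> interp_norm \<Omega> p (-\<alpha>/p) f \<and>
              interp_norm \<Omega> p (-\<alpha>/p) f \<le> ennreal (CA p \<alpha>) * grand_norm \<Omega> p \<alpha> f"
    using dirB[OF Om assms(3) _ assms(4,5)] dirA[OF Om assms(3) _ assms(4,5)] by blast
  ultimately show ?thesis by blast
qed

end
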